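(* Let $A_1:\mathcal H\to2^{\mathcal H}$ be maximally monotone, $A_2:\mathcal H\to\mathcal H$ single-valued and $L$-Lipschitz continuous, with $A_1+A_2$ maximally monotone; let $B:\mathcal H\to\mathcal H$ be monotone and $\mu$-Lipschitz continuous, and $C:\mathcal H\to\mathcal H$ be $\beta^{-1}$-cocoercive ($\beta>0$), and suppose $\operatorname{zer}(A_1+A_2+B+C)\ne\emptyset$. Let $\gamma>0$ and $\epsilon>0$ satisfy $$1-2\gamma L-2\gamma^2L\mu-\gamma^2\mu^2-\frac{\gamma\beta}{2}\ge\epsilon .$$ Given arbitrary $x_{-1},y_{-1},x_0\in\mathcal H$, define for $k=0,1,2,\dots$ $$y_k=J_{\gamma A_1}\big(x_k-\gamma A_2x_k-\gamma Bx_k-\gamma Cx_k-\gamma(A_2y_{k-1}-A_2x_{k-1})\big),\qquad x_{k+1}=y_k-\gamma By_k+\gamma Bx_k .$$ Then $\{x_k\}$ converges weakly to a point of $\operatorname{zer}(A_1+A_2+B+C)$.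
   Context: $\mathcal H$ is a real Hilbert space. $J_{\gamma A_1}=(\mathrm{Id}+\gamma A_1)^{-1}$ is the resolvent. An operator $T$ is $\beta^{-1}$-cocoercive if $\langle Tx-Ty,x-y\rangle\ge\beta^{-1}\|Tx-Ty\|^2$ for all $x,y$. $\operatorname{zer}(T)=\{x:0\in Tx\}$. *)

theory Defs
  imports "HOL-Analysis.Analysis"
begin

definition monotone_op :: "('a::real_inner \<Rightarrow> 'a set) \<Rightarrow> bool" where
  "monotone_op A \<longleftrightarrow> (\<forall>x y u v. u \<in> A x \<longrightarrow> v \<in> A y \<longrightarrow> inner (u - v) (x - y) \<ge> 0)"

definition max_monotone_op :: "('a::real_inner \<Rightarrow> 'a set) \<Rightarrow> bool" where
  "max_monotone_op A \<longleftrightarrow> monotone_op A \<and>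
     (\<forall>A'. monotone_op A' \<and> (\<forall>x. A x \<subseteq> A' x) \<longrightarrow> A' = A)"

definition sv :: "('a \<Rightarrow> 'a) \<Rightarrow> 'a \<Rightarrow> 'a set" where
  "sv T x = {T x}"

definition op_plus :: "('a::plus \<Rightarrow> 'a set) \<Rightarrow> ('a \<Rightarrow> 'a set) \<Rightarrow> 'a \<Rightarrow> 'a set" where
  "op_plus A B x = {u + v | u v. u \<in> A x \<and> v \<in> B x}"

definition zer :: "('a::zero \<Rightarrow> 'a set) \<Rightarrow> 'a set" where
  "zer A = {x. 0 \<in> A x}"

text \<open>Resolvent (Id + gamma A)^{-1}, as a set-valued operator.\<close>
definition resolvent :: "real \<Rightarrow> ('a::real_vector \<Rightarrow> 'a set) \<Rightarrow> 'a \<Rightarrow> 'a set" where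
  "resolvent \<gamma> A z = {p. \<exists>u \<in> A p. z = p + \<gamma> *\<^sub>R u}"

definition cocoercive :: "real \<Rightarrow> ('a::real_inner \<Rightarrow> 'a) \<Rightarrow> bool" where
  "cocoercive c T \<longleftrightarrow> (\<forall>x y. inner (T x - T y) (x - y) \<ge> c * (norm (T x - T y))\<^sup>2)"

definition weakly_converges :: "(nat \<Rightarrow> 'a::real_inner) \<Rightarrow> 'a \<Rightarrow> bool" where
  "weakly_converges x p \<longleftrightarrow> (\<forall>z. (\<lambda>k. inner (x k) z) \<longlonglongrightarrow> inner p z)"

end

theory Submission
  imports Defs "HOL-Library.Diagonal_Subsequence"
begin

lemma dsum_le:
  fixes G :: "('a::real_inner \<times> 'a) set"
  assumes fin: "finite G" and pos: "\<And>g. g \<in> G \<Longrightarrow> 0 \<le> \<mu> g" and s1: "sum \<mu> G = 1"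
    and mono: "\<And>g g'. g \<in> G \<Longrightarrow> g' \<in> G \<Longrightarrow> inner (fst g - fst g') (snd g - snd g') \<ge> 0"
  shows "(\<Sum>g\<in>G. \<mu> g * inner (snd g) ((\<Sum>g'\<in>G. \<mu> g' *\<^sub>R fst g') - fst g)) \<le> 0"
proof -
  define S where "S = (\<Sum>g\<in>G. \<Sum>g'\<in>G. \<mu> g * \<mu> g' * inner (snd g) (fst g' - fst g))"
  have e1: "(\<Sum>g'\<in>G. \<mu> g' *\<^sub>R fst g') - fst g = (\<Sum>g'\<in>G. \<mu> g' *\<^sub>R (fst g' - fst g))" for g
  proof -
    have "(\<Sum>g'\<in>G. \<mu> g' *\<^sub>R (fst g' - fst g)) = (\<Sum>g'\<in>G. \<mu> g' *\<^sub>R fst g') - (\<Sum>g'\<in>G. \<mu> g') *\<^sub>R fst g"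
      by (simp add: scaleR_diff_right sum_subtractf scaleR_sum_left)
    then show ?thesis using s1 by simp
  qed
  have L: "(\<Sum>g\<in>G. \<mu> g * inner (snd g) ((\<Sum>g'\<in>G. \<mu> g' *\<^sub>R fst g') - fst g)) = S"
    unfolding S_def e1 by (simp add: inner_sum_right sum_distrib_left mult.assoc)
  have S2: "S = (\<Sum>g\<in>G. \<Sum>g'\<in>G. \<mu> g * \<mu> g' * inner (snd g') (fst g - fst g'))"
    unfolding S_def by (subst sum.swap) (simp add: mult.commute)
  have "2 * S = S + S" by simp
  also have "\<dots> = (\<Sum>g\<in>G. \<Sum>g'\<in>G. \<mu> g * \<mu> g' * inner (snd g) (fst g' - fst g))
       + (\<Sum>g\<in>G. \<Sum>g'\<in>G. \<mu> g * \<mu> g' * inner (snd g') (fst g - fst g'))"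
    by (rule arg_cong2[where f="(+)"], simp add: S_def, rule S2)
  also have "\<dots> = (\<Sum>g\<in>G. \<Sum>g'\<in>G. \<mu> g * \<mu> g' * (inner (snd g) (fst g' - fst g) + inner (snd g') (fst g - fst g')))"
    by (simp only: sum.distrib[symmetric] distrib_left)
  also have "\<dots> = (\<Sum>g\<in>G. \<Sum>g'\<in>G. - (\<mu> g * \<mu> g' * inner (fst g - fst g') (snd g - snd g')))"
    by (intro sum.cong refl) (simp add: inner_diff_left inner_diff_right inner_commute algebra_simps)
  also have "\<dots> \<le> 0"
    by (intro sum_nonpos) (simp add: pos mono)
  finally show ?thesis using L by simp
qed


lemma norm_comb_sq:
  fixes u w :: "'a::real_inner"
  shows "(norm (u + t *\<^sub>R (w - u)))\<^sup>2 = (norm u)\<^sup>2 + 2 * t * inner u (w - u) + t\<^sup>2 * (norm (w - u))\<^sup>2"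
  unfolding power2_norm_eq_inner by (simp add: inner_add_left inner_add_right inner_diff_left inner_diff_right inner_commute power2_eq_square algebra_simps)

lemma finite_minty:
  fixes G :: "('a::real_inner \<times> 'a) set"
  assumes fin: "finite G"
    and mono: "\<And>g g'. g \<in> G \<Longrightarrow> g' \<in> G \<Longrightarrow> inner (fst g - fst g') (snd g - snd g') \<ge> 0"
  shows "\<exists>x. \<forall>g\<in>G. inner (x + snd g) (x - fst g) \<le> 0"
proof (cases "G = {}")
  case True then show ?thesis by simp
next
  case False
  define \<phi> :: "'a \<times> 'a \<Rightarrow> real \<times> ('a \<times> 'a)" where "\<phi> g = (- inner (fst g) (snd g), g)" for g
  define P where "P = convex hull (\<phi> ` G)"
  define V :: "real \<times> ('a \<times> 'a) \<Rightarrow> real" where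
    "V p = fst p - (norm (fst (snd p) - snd (snd p)))\<^sup>2 / 4" for p
  have cP: "compact P" unfolding P_def using fin by (intro finite_imp_compact_convex_hull) auto
  have neP: "P \<noteq> {}" unfolding P_def using False by simp
  have cV: "continuous_on P V" unfolding V_def by (intro continuous_intros) auto
  obtain p where pP: "p \<in> P" and pmax: "\<And>q. q \<in> P \<Longrightarrow> V q \<le> V p"
    using continuous_attains_sup[OF cP neP cV] by blast
  define s where "s = fst p"
  define A where "A = fst (snd p)"
  define B where "B = snd (snd p)"
  define x where "x = (1/2) *\<^sub>R (A - B)"
  have Vp: "V p = s - (norm (A - B))\<^sup>2 / 4" unfolding V_def s_def A_def B_def by simp
  have claim1: "inner (x + snd g) (x - fst g) \<le> V p" if gG: "g \<in> G" for g
  proof (rule ccontr)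
    assume nc: "\<not> ?thesis"
    define a where "a = fst g"
    define b where "b = snd g"
    define c where "c = - inner a b"
    define h where "h = inner (x + b) (x - a)"
    define d where "d = h - V p"
    have dpos: "d > 0" using nc unfolding d_def h_def a_def b_def by simp
    define u where "u = A - B"
    define w where "w = a - b"
    define N where "N = (norm (w - u))\<^sup>2 / 4"
    have N0: "N \<ge> 0" unfolding N_def by simp
    define t where "t = min 1 (d / (2 * (N + 1)))"
    have t0: "t > 0" unfolding t_def using dpos N0 by simp
    have t1: "t \<le> 1" unfolding t_def by simp
    have tN: "t * N < d"
    proof -
      have "t * N \<le> d / (2 * (N + 1)) * N" unfolding t_def using N0
        by (intro mult_right_mono) auto
      also have "\<dots> < d" using dpos N0 by (simp add: field_simps) (smt (verit) mult_nonneg_nonneg)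
      finally show ?thesis .
    qed
    define pt where "pt = (1 - t) *\<^sub>R p + t *\<^sub>R \<phi> g"
    have ptP: "pt \<in> P"
    proof -
      have "\<phi> g \<in> P" unfolding P_def using gG by (simp add: hull_inc)
      then show ?thesis unfolding pt_def P_def using pP t0 t1
        by (intro convexD[OF convex_convex_hull]) (auto simp: P_def)
    qed
    have "V pt = (1 - t) * s + t * c - (norm (u + t *\<^sub>R (w - u)))\<^sup>2 / 4"
    proof -
      have "fst (snd pt) - snd (snd pt) = u + t *\<^sub>R (w - u)"
        unfolding pt_def \<phi>_def u_def w_def A_def B_def a_def b_def
        by (simp add: algebra_simps)
      moreover have "fst pt = (1 - t) * s + t * c"
        unfolding pt_def \<phi>_def s_def c_def a_def b_def by simp
      ultimately show ?thesis unfolding V_def by simp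
    qed
    also have "\<dots> = V p + t * d - t\<^sup>2 * N"
    proof -
      have hx: "h = (norm u)\<^sup>2 / 4 - inner u w / 2 + c"
        unfolding h_def x_def u_def w_def c_def
        by (simp add: power2_norm_eq_inner inner_add_left inner_add_right inner_diff_left inner_diff_right
            inner_commute algebra_simps) (simp add: field_simps)
      show ?thesis unfolding norm_comb_sq d_def N_def Vp hx
        by (simp add: u_def inner_diff_right power2_norm_eq_inner algebra_simps) (simp add: field_simps)
    qed
    finally have "V pt = V p + t * d - t\<^sup>2 * N" .
    with pmax[OF ptP] have "t * d \<le> t\<^sup>2 * N" by simp
    then have "t * d \<le> t * (t * N)" by (simp add: power2_eq_square mult.assoc)
    then have "d \<le> t * N" using t0 by simp
    with tN show False by simp
  qed
  have claim2: "V p \<le> 0"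
  proof -
    have finI: "finite (\<phi> ` G)" using fin by simp
    obtain u where u0: "\<forall>q\<in>\<phi> ` G. 0 \<le> u q" and u1: "sum u (\<phi> ` G) = 1"
      and us: "(\<Sum>q\<in>\<phi> ` G. u q *\<^sub>R q) = p"
      using pP unfolding P_def convex_hull_finite[OF finI] by blast
    have inj: "inj_on \<phi> G" unfolding inj_on_def \<phi>_def by auto
    define \<mu> where "\<mu> = u \<circ> \<phi>"
    have mu0: "\<And>g. g \<in> G \<Longrightarrow> 0 \<le> \<mu> g" using u0 unfolding \<mu>_def by auto
    have mu1: "sum \<mu> G = 1" using u1 unfolding \<mu>_def by (simp add: sum.reindex[OF inj])
    have psum: "p = (\<Sum>g\<in>G. \<mu> g *\<^sub>R \<phi> g)" using us unfolding \<mu>_def by (simp add: sum.reindex[OF inj])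
    have sE: "s = (\<Sum>g\<in>G. \<mu> g * (- inner (fst g) (snd g)))"
      unfolding s_def psum fst_sum by (simp add: \<phi>_def)
    have AE: "A = (\<Sum>g\<in>G. \<mu> g *\<^sub>R fst g)"
      unfolding A_def psum snd_sum fst_sum by (simp add: \<phi>_def)
    have BE: "B = (\<Sum>g\<in>G. \<mu> g *\<^sub>R snd g)"
      unfolding B_def psum snd_sum by (simp add: \<phi>_def)
    have key: "(\<Sum>g\<in>G. \<mu> g * inner (snd g) (A - fst g)) \<le> 0"
      unfolding AE by (rule dsum_le[OF fin mu0 mu1 mono])
    have "(\<Sum>g\<in>G. \<mu> g * inner (snd g) (A - fst g)) = inner B A + s"
      unfolding BE sE by (simp add: inner_sum_left inner_diff_right sum_subtractf algebra_simps sum_negf) (simp add: inner_commute)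
    with key have "inner B A + s \<le> 0" by simp
    moreover have "(norm (A + B))\<^sup>2 / 4 = (norm (A - B))\<^sup>2 / 4 + inner B A"
      by (simp add: power2_norm_eq_inner inner_add_left inner_add_right inner_diff_left inner_diff_right
          inner_commute algebra_simps) (simp add: field_simps)
    moreover have "(norm (A + B))\<^sup>2 / 4 \<ge> 0" by simp
    ultimately show ?thesis unfolding Vp by linarith
  qed
  show ?thesis using claim1 claim2 by (intro exI[of _ x]) (meson order_trans)
qed

lemma parallelogram_conv:
  fixes u v :: "'a::real_inner"
  assumes C: "convex C" and u: "u \<in> C" and v: "v \<in> C" and lb: "\<And>z. z \<in> C \<Longrightarrow> \<rho> \<le> norm z" and r0: "0 \<le> \<rho>"
  shows "(norm (u - v))\<^sup>2 \<le> 2 * (norm u)\<^sup>2 + 2 * (norm v)\<^sup>2 - 4 * \<rho>\<^sup>2"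
proof -
  have "(1/2) *\<^sub>R u + (1/2) *\<^sub>R v \<in> C" using convexD[OF C u v, of "1/2" "1/2"] by simp
  then have "\<rho> \<le> norm ((1/2) *\<^sub>R (u + v))" using lb by (simp add: scaleR_add_right)
  then have "\<rho> \<le> norm (u + v) / 2" by simp
  then have "2 * \<rho> \<le> norm (u + v)" by simp
  then have "(2 * \<rho>)\<^sup>2 \<le> (norm (u + v))\<^sup>2" using r0 by (intro power_mono) auto
  moreover have "(norm (u - v))\<^sup>2 + (norm (u + v))\<^sup>2 = 2 * (norm u)\<^sup>2 + 2 * (norm v)\<^sup>2"
    unfolding power2_norm_eq_inner by (simp add: inner_add_left inner_add_right inner_diff_left inner_diff_right inner_commute)
  ultimately show ?thesis by (simp add: power_mult_distrib)
qed

lemma sq_bound_tendsto0: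
  fixes a :: "nat \<Rightarrow> 'a::real_normed_vector"
  assumes "\<And>n. (norm (a n))\<^sup>2 \<le> c / (real n + 1)" and c: "c > 0"
  shows "a \<longlonglongrightarrow> 0"
proof (rule LIMSEQ_I)
  fix r :: real assume r: "r > 0"
  obtain N :: nat where N: "c / r\<^sup>2 < real N" using reals_Archimedean2 by blast
  show "\<exists>no. \<forall>n\<ge>no. norm (a n - 0) < r"
  proof (intro exI allI impI)
    fix n assume n: "N \<le> n"
    have "c / r\<^sup>2 < real n + 1" using N n by linarith
    then have "c < r\<^sup>2 * (real n + 1)" using r by (simp add: field_simps)
    then have "c / (real n + 1) < r\<^sup>2" by (simp add: field_simps)
    with assms(1)[of n] have "(norm (a n))\<^sup>2 < r\<^sup>2" by linarith
    then show "norm (a n - 0) < r" using r by (simp add: power_less_imp_less_base)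
  qed
qed

lemma fip_hilbert:
  fixes K :: "'i \<Rightarrow> 'a::{real_inner,complete_space} set"
  assumes i0: "i0 \<in> I" and bnd: "bounded (K i0)"
    and cl: "\<And>i. i \<in> I \<Longrightarrow> closed (K i)" and cv: "\<And>i. i \<in> I \<Longrightarrow> convex (K i)"
    and fip: "\<And>F. finite F \<Longrightarrow> F \<subseteq> I \<Longrightarrow> (\<Inter>i\<in>insert i0 F. K i) \<noteq> {}"
  shows "\<exists>x. \<forall>i\<in>I. x \<in> K i"
proof -
  define KK where "KK F = (\<Inter>i\<in>insert i0 F. K i)" for F
  define FS where "FS = {F. finite F \<and> F \<subseteq> I}"
  obtain M where M0: "M \<ge> 0" and MB: "\<And>z. z \<in> K i0 \<Longrightarrow> norm z \<le> M"
    using bnd unfolding bounded_iff by (meson dual_order.trans norm_ge_zero)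
  define rr where "rr F = Inf (norm ` KK F)" for F
  have KKne: "KK F \<noteq> {}" if "F \<in> FS" for F using fip that unfolding KK_def FS_def by auto
  have KKcv: "convex (KK F)" if "F \<in> FS" for F
    unfolding KK_def using that i0 cv unfolding FS_def by (intro convex_INT) auto
  have KKsub: "KK F \<subseteq> K i0" for F unfolding KK_def by auto
  have KKi: "KK F \<subseteq> K i" if "i \<in> F" for F i unfolding KK_def using that by auto
  have KKmono: "KK F' \<subseteq> KK F" if "F \<subseteq> F'" for F F' unfolding KK_def using that by auto
  have bb: "bdd_below (norm ` KK F)" for F by (rule bdd_belowI[of _ 0]) auto
  have rr_le: "rr F \<le> norm z" if "z \<in> KK F" for F z
    unfolding rr_def using that bb by (intro cInf_lower) auto
  have rr0: "0 \<le> rr F" if "F \<in> FS" for F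
    unfolding rr_def using KKne[OF that] by (intro cInf_greatest) auto
  have rrM: "rr F \<le> M" if "F \<in> FS" for F
  proof -
    from KKne[OF that] obtain z where "z \<in> KK F" by blast
    then show ?thesis using rr_le[of z F] MB KKsub by force
  qed
  have rrmono: "rr F \<le> rr F'" if "F \<in> FS" "F' \<in> FS" "F \<subseteq> F'" for F F'
    unfolding rr_def using KKne[OF that(2)] bb KKmono[OF that(3)]
    by (intro cInf_superset_mono) auto
  have rrapx: "\<exists>z\<in>KK F. norm z < rr F + e" if hF: "F \<in> FS" and he: "e > 0" for F e
  proof -
    have "Inf (norm ` KK F) < rr F + e" unfolding rr_def using he by simp
    then obtain w where "w \<in> norm ` KK F" "w < rr F + e"
      using cInf_lessD[of "norm ` KK F"] KKne[OF hF] by blast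
    then show ?thesis by blast
  qed
  define R where "R = Sup (rr ` FS)"
  have FSne: "rr ` FS \<noteq> {}" unfolding FS_def by auto
  have bdR: "bdd_above (rr ` FS)" using rrM by (intro bdd_aboveI[of _ M]) auto
  have rrR: "rr F \<le> R" if "F \<in> FS" for F unfolding R_def using bdR that by (intro cSup_upper) auto
  have RM: "R \<le> M" unfolding R_def using FSne rrM by (intro cSup_least) auto
  define e where "e n = 1 / (real n + 1)" for n :: nat
  have e0: "e n > 0" for n unfolding e_def by simp
  have e1: "e n \<le> 1" for n unfolding e_def by simp
  have emono: "e m \<le> e n" if "n \<le> m" for n m unfolding e_def using that by (simp add: frac_le)
  have "\<exists>F. F \<in> FS \<and> R - e n < rr F" for n
  proof -
    have "R - e n < R" using e0 by simp
    then show ?thesis unfolding R_def using less_cSup_iff[OF FSne bdR] by auto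
  qed
  then obtain F where FFS: "\<And>n. F n \<in> FS" and Fr: "\<And>n. R - e n < rr (F n)" by metis
  define G where "G n = (\<Union>k\<le>n. F k)" for n
  have GFS: "G n \<in> FS" for n using FFS unfolding G_def FS_def by auto
  have Gmono: "G n \<subseteq> G m" if "n \<le> m" for n m unfolding G_def using that by (auto intro: le_trans)
  have Gr: "R - e n < rr (G n)" for n
  proof -
    have "F n \<subseteq> G n" unfolding G_def by auto
    then show ?thesis using Fr[of n] rrmono[OF FFS GFS, of n n] by linarith
  qed
  have "\<exists>z\<in>KK (G n). norm z < rr (G n) + e n" for n using rrapx[OF GFS e0] .
  then obtain p where pK: "\<And>n. p n \<in> KK (G n)" and pn: "\<And>n. norm (p n) < rr (G n) + e n" by metis
  define c where "c = 16 * M + 4"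
  have c0: "c > 0" unfolding c_def using M0 by simp
  have est: "(norm (u - v))\<^sup>2 \<le> c * e n"
    if u: "u \<in> KK (G n)" and v: "v \<in> KK (G n)" and nu: "norm u < rr (G n) + e n"
      and nv: "norm v < r' + e n" and r'0: "0 \<le> r'" and r'R: "r' \<le> R" for u v n r'
  proof -
    let ?r = "rr (G n)"
    have h1: "(norm (u - v))\<^sup>2 \<le> 2 * (norm u)\<^sup>2 + 2 * (norm v)\<^sup>2 - 4 * ?r\<^sup>2"
      by (rule parallelogram_conv[OF KKcv[OF GFS] u v rr_le rr0[OF GFS]])
    have r0: "0 \<le> ?r" using rr0[OF GFS] .
    have rM: "?r \<le> M" using rrM[OF GFS] .
    have h2: "(norm u)\<^sup>2 \<le> (?r + e n)\<^sup>2" using nu by (intro power_mono) auto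
    have h3: "(norm v)\<^sup>2 \<le> (r' + e n)\<^sup>2" using nv by (intro power_mono) auto
    have h4: "R - e n < ?r" using Gr .
    have en: "0 < e n" "e n \<le> 1" using e0 e1 by auto
    have "(?r + e n)\<^sup>2 \<le> ?r\<^sup>2 + 2 * M * e n + e n" 
    proof -
      have "e n * e n \<le> e n" using en by (simp add: mult_le_cancel_right1)
      moreover have "e n * ?r \<le> e n * M" using en rM by (intro mult_left_mono) auto
      ultimately show ?thesis by (simp add: power2_eq_square algebra_simps)
    qed
    moreover have "(r' + e n)\<^sup>2 \<le> ?r\<^sup>2 + 6 * M * e n + e n"
    proof -
      have "(r' + e n)\<^sup>2 = r'\<^sup>2 + 2 * r' * e n + e n * e n" by (simp add: power2_eq_square algebra_simps)
      also have "\<dots> \<le> R\<^sup>2 + 2 * M * e n + e n"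
      proof -
        have "r'\<^sup>2 \<le> R\<^sup>2" using r'0 r'R by (intro power_mono) auto
        moreover have "2 * r' * e n \<le> 2 * M * e n" using r'R RM en by simp
        moreover have "e n * e n \<le> e n" using en by (simp add: mult_le_cancel_right1)
        ultimately show ?thesis by linarith
      qed
      also have "R\<^sup>2 \<le> ?r\<^sup>2 + 4 * M * e n"
      proof -
        have "R\<^sup>2 - ?r\<^sup>2 = (R - ?r) * (R + ?r)" by (simp add: power2_eq_square algebra_simps)
        also have "\<dots> \<le> e n * (2 * M)"
          using h4 r0 rM RM rrR[OF GFS, of n] en by (intro mult_mono) auto
        finally have "R\<^sup>2 - ?r\<^sup>2 \<le> e n * (2 * M)" .
        moreover have "0 \<le> M * e n" using M0 en by simp
        ultimately show ?thesis by (simp add: algebra_simps)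
      qed
      then have "R\<^sup>2 + 2 * M * e n + e n \<le> ?r\<^sup>2 + 6 * M * e n + e n" by simp
      finally show ?thesis .
    qed
    ultimately show ?thesis using h1 h2 h3 unfolding c_def by (simp add: algebra_simps)
  qed
  have pcauchy: "(norm (p n - p m))\<^sup>2 \<le> c * e n" if "n \<le> m" for n m
  proof -
    have "p m \<in> KK (G n)" using pK[of m] KKmono[OF Gmono[OF that]] by auto
    moreover have "norm (p m) < rr (G m) + e n" using pn[of m] emono[OF that] by simp
    ultimately show ?thesis
      by (intro est[OF pK _ pn _ rr0[OF GFS] rrR[OF GFS]])
  qed
  have "Cauchy p"
  proof (rule metric_CauchyI)
    fix r :: real assume r: "r > 0"
    obtain N :: nat where N: "c / r\<^sup>2 < real N" using reals_Archimedean2 by blast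
    show "\<exists>N. \<forall>m\<ge>N. \<forall>n\<ge>N. dist (p m) (p n) < r"
    proof (intro exI allI impI)
      fix m n assume m: "N \<le> m" and n: "N \<le> n"
      have key: "(norm (p a - p b))\<^sup>2 < r\<^sup>2" if "N \<le> a" "a \<le> b" for a b
      proof -
        have "c * e a \<le> c * e N" using emono[OF that(1)] c0 by simp
        also have "c * e N < r\<^sup>2"
        proof -
          have "c / r\<^sup>2 < real N + 1" using N by linarith
          then have "c < r\<^sup>2 * (real N + 1)" using r by (simp add: field_simps)
          then show ?thesis unfolding e_def by (simp add: field_simps)
        qed
        finally show ?thesis using pcauchy[OF that(2)] by linarith
      qed
      have "(norm (p m - p n))\<^sup>2 < r\<^sup>2"
      proof (cases "m \<le> n")
        case True then show ?thesis using key[OF m True] by simp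
      next
        case False then show ?thesis using key[OF n, of m] by (simp add: norm_minus_commute)
      qed
      then show "dist (p m) (p n) < r" using r by (simp add: dist_norm power_less_imp_less_base)
    qed
  qed
  then obtain x where px: "p \<longlonglongrightarrow> x" using Cauchy_convergent_iff convergent_def by blast
  have "x \<in> K i" if iI: "i \<in> I" for i
  proof -
    have HFS: "insert i (G n) \<in> FS" for n using GFS[of n] iI unfolding FS_def by auto
    have "\<exists>z\<in>KK (insert i (G n)). norm z < rr (insert i (G n)) + e n" for n using rrapx[OF HFS e0] .
    then obtain q where qK: "\<And>n. q n \<in> KK (insert i (G n))"
      and qn: "\<And>n. norm (q n) < rr (insert i (G n)) + e n" by metis
    have qG: "q n \<in> KK (G n)" for n using qK[of n] KKmono[of "G n" "insert i (G n)"] by auto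
    have qi: "q n \<in> K i" for n using qK[of n] KKi[of i "insert i (G n)"] by auto
    have "(norm (p n - q n))\<^sup>2 \<le> c * e n" for n
      by (rule est[OF pK qG pn qn rr0[OF HFS] rrR[OF HFS]])
    then have "(norm (p n - q n))\<^sup>2 \<le> c / (real n + 1)" for n unfolding e_def by simp
    then have "(\<lambda>n. p n - q n) \<longlonglongrightarrow> 0" by (rule sq_bound_tendsto0[OF _ c0])
    then have "(\<lambda>n. p n - (p n - q n)) \<longlonglongrightarrow> x - 0" by (intro tendsto_diff px)
    then have "q \<longlonglongrightarrow> x" by simp
    then show ?thesis using cl[OF iI] qi closed_sequentially by blast
  qed
  then show ?thesis by blast
qed


lemma ball_form:
  fixes x a b :: "'a::real_inner"
  shows "inner (x + b) (x - a) \<le> 0 \<longleftrightarrow> x \<in> cball ((1/2) *\<^sub>R (a - b)) (norm (a + b) / 2)"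
proof -
  have id: "(norm (x - (1/2) *\<^sub>R (a - b)))\<^sup>2 = inner (x + b) (x - a) + (norm (a + b) / 2)\<^sup>2"
    unfolding power2_norm_eq_inner power_divide
    by (simp add: inner_add_left inner_add_right inner_diff_left inner_diff_right inner_commute algebra_simps)
  have "inner (x + b) (x - a) \<le> 0 \<longleftrightarrow> (norm (x - (1/2) *\<^sub>R (a - b)))\<^sup>2 \<le> (norm (a + b) / 2)\<^sup>2"
    using id by linarith
  also have "\<dots> \<longleftrightarrow> norm (x - (1/2) *\<^sub>R (a - b)) \<le> norm (a + b) / 2"
    using power2_le_iff_abs_le[of "norm (a + b) / 2" "norm (x - (1/2) *\<^sub>R (a - b))"] by simp
  finally show ?thesis by (simp add: dist_norm norm_minus_commute)
qed


lemma maxmono_add_point: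
  assumes mm: "max_monotone_op A"
    and rel: "\<And>a b. b \<in> A a \<Longrightarrow> inner (u - b) (x - a) \<ge> 0"
  shows "u \<in> A x"
proof -
  define A' where "A' z = (if z = x then insert u (A z) else A z)" for z
  have mA: "monotone_op A" using mm unfolding max_monotone_op_def by simp
  have cases': "v \<in> A y \<or> (y = x \<and> v = u)" if "v \<in> A' y" for v y
    using that unfolding A'_def by (cases "y = x") auto
  have "monotone_op A'"
    unfolding monotone_op_def
  proof (intro allI impI)
    fix y1 y2 v1 v2 assume v1: "v1 \<in> A' y1" and v2: "v2 \<in> A' y2"
    from cases'[OF v1] cases'[OF v2]
    show "0 \<le> inner (v1 - v2) (y1 - y2)"
    proof (elim disjE conjE)
      assume "v1 \<in> A y1" "v2 \<in> A y2" then show ?thesis using mA unfolding monotone_op_def by blast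
    next
      assume h: "v1 \<in> A y1" "y2 = x" "v2 = u"
      have "inner (v1 - v2) (y1 - y2) = inner (u - v1) (x - y1)"
        unfolding h(2,3) by (simp add: inner_diff_left inner_diff_right inner_commute)
      then show ?thesis using rel[OF h(1)] by simp
    next
      assume h: "y1 = x" "v1 = u" "v2 \<in> A y2"
      then show ?thesis using rel[OF h(3)] by simp
    next
      assume "y1 = x" "v1 = u" "y2 = x" "v2 = u" then show ?thesis by simp
    qed
  qed
  moreover have "\<forall>z. A z \<subseteq> A' z" unfolding A'_def by auto
  ultimately have "A' = A" using mm unfolding max_monotone_op_def by blast
  then have "A' x = A x" by simp
  then show ?thesis unfolding A'_def by (metis insertI1)
qed

lemma maxmono_graph_ne:
  assumes mm: "max_monotone_op A"
  shows "\<exists>a b. b \<in> A a"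
proof (rule ccontr)
  assume nex: "\<not> ?thesis"
  have "0 \<in> A 0"
  proof (rule maxmono_add_point[OF mm])
    fix a b assume "b \<in> A a" with nex show "0 \<le> inner (0 - b) (0 - a)" by blast
  qed
  with nex show False by blast
qed
lemma minty:
  fixes A :: "'a::{real_inner,complete_space} \<Rightarrow> 'a set"
  assumes mm: "max_monotone_op A" and lam: "t > 0"
  shows "\<exists>x. \<exists>u\<in>A x. w = x + t *\<^sub>R u"
proof -
  have mA: "monotone_op A" using mm unfolding max_monotone_op_def by simp
  define Gr where "Gr = {(a, b). b \<in> A a}"
  define K where "K g = {x. inner (x + (t *\<^sub>R snd g - w)) (x - fst g) \<le> 0}" for g
  have Kball: "K g = cball ((1/2) *\<^sub>R (fst g - (t *\<^sub>R snd g - w))) (norm (fst g + (t *\<^sub>R snd g - w)) / 2)" for g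
    unfolding K_def by (rule set_eqI) (simp only: mem_Collect_eq ball_form)
  obtain a0 b0 where g0: "b0 \<in> A a0" using maxmono_graph_ne[OF mm] by blast
  have "\<exists>x. \<forall>g\<in>Gr. x \<in> K g"
  proof (rule fip_hilbert[where K=K and I=Gr, of "(a0, b0)"])
    show "(a0, b0) \<in> Gr" using g0 unfolding Gr_def by simp
    show "bounded (K (a0, b0))" unfolding Kball by simp
    show "closed (K g)" for g unfolding Kball by simp
    show "convex (K g)" for g unfolding Kball by simp
    fix F assume fF: "finite F" and FG: "F \<subseteq> Gr"
    define F' where "F' = (\<lambda>g. (fst g, t *\<^sub>R snd g - w)) ` insert (a0, b0) F"
    have "finite F'" unfolding F'_def using fF by simp
    moreover have "inner (fst g - fst g') (snd g - snd g') \<ge> 0" if gF: "g \<in> F'" and gF2: "g' \<in> F'" for g g'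
    proof -
      obtain h where hh1: "h \<in> insert (a0, b0) F" and gh1: "g = (fst h, t *\<^sub>R snd h - w)"
        using gF unfolding F'_def by blast
      obtain h' where hh2: "h' \<in> insert (a0, b0) F" and gh2: "g' = (fst h', t *\<^sub>R snd h' - w)"
        using gF2 unfolding F'_def by blast
      note hh = hh1 hh2 and gh = gh1 gh2
      have "snd h \<in> A (fst h)" "snd h' \<in> A (fst h')" using hh FG g0 unfolding Gr_def by auto
      then have "0 \<le> inner (snd h - snd h') (fst h - fst h')" using mA unfolding monotone_op_def by blast
      then have "0 \<le> t * inner (fst h - fst h') (snd h - snd h')" using lam by (simp add: inner_commute)
      moreover have "(t *\<^sub>R snd h - w) - (t *\<^sub>R snd h' - w) = t *\<^sub>R (snd h - snd h')"
        by (simp add: scaleR_diff_right)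
      ultimately show ?thesis unfolding gh by simp
    qed
    ultimately obtain x where xF: "\<forall>g\<in>F'. inner (x + snd g) (x - fst g) \<le> 0"
      using finite_minty[of F'] by blast
    have "x \<in> K g" if gi: "g \<in> insert (a0, b0) F" for g
    proof -
      have "(fst g, t *\<^sub>R snd g - w) \<in> F'" unfolding F'_def using gi by (rule imageI)
      with xF have "inner (x + (t *\<^sub>R snd g - w)) (x - fst g) \<le> 0" by fastforce
      then show ?thesis unfolding K_def by simp
    qed
    then show "(\<Inter>g\<in>insert (a0, b0) F. K g) \<noteq> {}" by blast
  qed
  then obtain x where xK: "\<And>g. g \<in> Gr \<Longrightarrow> x \<in> K g" by blast
  have "(1/t) *\<^sub>R (w - x) \<in> A x"
  proof (rule maxmono_add_point[OF mm])
    fix a b assume "b \<in> A a"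
    then have "inner (x + (t *\<^sub>R b - w)) (x - a) \<le> 0" using xK[of "(a, b)"] unfolding Gr_def K_def by simp
    then have "0 \<le> inner (w - x - t *\<^sub>R b) (x - a)"
      by (simp add: inner_diff_left inner_add_left algebra_simps)
    then have "0 \<le> (1/t) * inner (w - x - t *\<^sub>R b) (x - a)" using lam by simp
    moreover have "(1/t) *\<^sub>R (w - x - t *\<^sub>R b) = (1/t) *\<^sub>R (w - x) - b" using lam
      by (simp add: scaleR_diff_right)
    ultimately show "0 \<le> inner ((1/t) *\<^sub>R (w - x) - b) (x - a)"
      by (metis inner_scaleR_left)
  qed
  moreover have "w = x + t *\<^sub>R ((1/t) *\<^sub>R (w - x))" using lam by simp
  ultimately show ?thesis by blast
qed

lemma op_plus_sv_iff:
  fixes f :: "'a::ab_group_add"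
  shows "f \<in> op_plus A (sv T) x \<longleftrightarrow> f - T x \<in> A x"
proof
  assume "f \<in> op_plus A (sv T) x"
  then obtain u where "u \<in> A x" "f = u + T x" unfolding op_plus_def sv_def by auto
  then show "f - T x \<in> A x" by simp
next
  assume "f - T x \<in> A x"
  moreover have "f = (f - T x) + T x" by simp
  ultimately show "f \<in> op_plus A (sv T) x" unfolding op_plus_def sv_def by blast
qed

lemma monotone_sum_sv:
  assumes "monotone_op A" "monotone_op (sv T)"
  shows "monotone_op (op_plus A (sv T))"
  unfolding monotone_op_def
proof (intro allI impI)
  fix x y u v assume "u \<in> op_plus A (sv T) x" "v \<in> op_plus A (sv T) y"
  then have "u - T x \<in> A x" "v - T y \<in> A y" by (simp_all add: op_plus_sv_iff)
  then have "0 \<le> inner ((u - T x) - (v - T y)) (x - y)" using assms(1) unfolding monotone_op_def by blast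
  moreover have "0 \<le> inner (T x - T y) (x - y)" using assms(2) unfolding monotone_op_def sv_def by blast
  ultimately show "0 \<le> inner (u - v) (x - y)"
    by (simp add: inner_diff_left algebra_simps)
qed

lemma resolvent_nonexp:
  fixes A :: "'a::real_inner \<Rightarrow> 'a set"
  assumes mA: "monotone_op A" and t: "t > 0"
    and u1: "u1 \<in> A p1" and u2: "u2 \<in> A p2"
  shows "norm (p1 - p2) \<le> norm ((p1 + t *\<^sub>R u1) - (p2 + t *\<^sub>R u2))"
proof -
  have m: "0 \<le> inner (u1 - u2) (p1 - p2)" using mA u1 u2 unfolding monotone_op_def by blast
  have "(norm (p1 - p2))\<^sup>2 \<le> inner (p1 - p2) ((p1 + t *\<^sub>R u1) - (p2 + t *\<^sub>R u2))"
  proof -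
    have eq: "(p1 + t *\<^sub>R u1) - (p2 + t *\<^sub>R u2) = (p1 - p2) + t *\<^sub>R (u1 - u2)" by (simp add: algebra_simps)
    have "inner (p1 - p2) ((p1 + t *\<^sub>R u1) - (p2 + t *\<^sub>R u2)) = (norm (p1 - p2))\<^sup>2 + t * inner (u1 - u2) (p1 - p2)"
      unfolding eq by (simp add: inner_add_right power2_norm_eq_inner inner_commute)
    then show ?thesis using m t by simp
  qed
  also have "\<dots> \<le> norm (p1 - p2) * norm ((p1 + t *\<^sub>R u1) - (p2 + t *\<^sub>R u2))"
    by (rule Cauchy_Schwarz_ineq2[THEN order_trans[OF abs_ge_self]])
  finally have h: "norm (p1 - p2) * norm (p1 - p2) \<le> norm (p1 - p2) * norm ((p1 + t *\<^sub>R u1) - (p2 + t *\<^sub>R u2))"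
    by (simp add: power2_eq_square)
  show ?thesis
  proof (cases "norm (p1 - p2) = 0")
    case True then show ?thesis by simp
  next
    case False then have "norm (p1 - p2) > 0" by simp
    then show ?thesis using h by (simp add: mult_le_cancel_left_pos)
  qed
qed

lemma sum_maxmono:
  fixes A :: "'a::{real_inner,complete_space} \<Rightarrow> 'a set" and T :: "'a \<Rightarrow> 'a"
  assumes mm: "max_monotone_op A" and mT: "monotone_op (sv T)" and lT: "K-lipschitz_on UNIV T"
  shows "max_monotone_op (op_plus A (sv T))"
proof -
  have mA: "monotone_op A" using mm unfolding max_monotone_op_def by simp
  have mS: "monotone_op (op_plus A (sv T))" by (rule monotone_sum_sv[OF mA mT])
  have K0: "K \<ge> 0" and KL: "\<And>a b. dist (T a) (T b) \<le> K * dist a b"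
    using lT unfolding lipschitz_on_def by auto
  define t where "t = 1 / (2 * K + 2)"
  have t0: "t > 0" unfolding t_def using K0 by simp
  have tK: "t * K < 1" "0 \<le> t * K" unfolding t_def using K0 by (simp_all add: field_simps)
  define J where "J w = (SOME p. \<exists>u\<in>A p. w = p + t *\<^sub>R u)" for w
  have J: "\<exists>u\<in>A (J w). w = J w + t *\<^sub>R u" for w
    unfolding J_def by (rule someI_ex) (rule minty[OF mm t0])
  have Jne: "norm (J w1 - J w2) \<le> norm (w1 - w2)" for w1 w2
  proof -
    obtain u1 where u1: "u1 \<in> A (J w1)" "w1 = J w1 + t *\<^sub>R u1" using J by blast
    obtain u2 where u2: "u2 \<in> A (J w2)" "w2 = J w2 + t *\<^sub>R u2" using J by blast
    show ?thesis using resolvent_nonexp[OF mA t0 u1(1) u2(1)] u1(2) u2(2) by simp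
  qed
  have "\<forall>A'. monotone_op A' \<and> (\<forall>x. op_plus A (sv T) x \<subseteq> A' x) \<longrightarrow> A' = op_plus A (sv T)"
  proof (intro allI impI)
    fix A' assume h: "monotone_op A' \<and> (\<forall>x. op_plus A (sv T) x \<subseteq> A' x)"
    have "A' q \<subseteq> op_plus A (sv T) q" for q
    proof
      fix f assume fq: "f \<in> A' q"
      define \<Phi> where "\<Phi> x = J (q + t *\<^sub>R f - t *\<^sub>R T x)" for x
      have "\<forall>x y. dist (\<Phi> x) (\<Phi> y) \<le> (t * K) * dist x y"
      proof (intro allI)
        fix x y
        have "dist (\<Phi> x) (\<Phi> y) \<le> norm ((q + t *\<^sub>R f - t *\<^sub>R T x) - (q + t *\<^sub>R f - t *\<^sub>R T y))"
          unfolding \<Phi>_def dist_norm by (rule Jne)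
        also have "\<dots> = t * dist (T x) (T y)"
        proof -
          have "(q + t *\<^sub>R f - t *\<^sub>R T x) - (q + t *\<^sub>R f - t *\<^sub>R T y) = t *\<^sub>R (T y - T x)"
            by (simp add: algebra_simps)
          then show ?thesis using t0 by (simp add: dist_norm norm_minus_commute)
        qed
        also have "\<dots> \<le> t * (K * dist x y)" using KL t0 by simp
        finally show "dist (\<Phi> x) (\<Phi> y) \<le> (t * K) * dist x y" by simp
      qed
      then obtain x where fx: "\<Phi> x = x" using banach_fix_type[OF tK(2) tK(1)] by blast
      obtain u where u: "u \<in> A x" and ue: "q + t *\<^sub>R f - t *\<^sub>R T x = x + t *\<^sub>R u"
        using J[of "q + t *\<^sub>R f - t *\<^sub>R T x"] fx unfolding \<Phi>_def by auto
      have "u + T x \<in> op_plus A (sv T) x" by (simp add: op_plus_sv_iff u)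
      then have "u + T x \<in> A' x" using h by blast
      then have m: "0 \<le> inner (f - (u + T x)) (q - x)" using h fq unfolding monotone_op_def by blast
      have tf: "t *\<^sub>R (f - (u + T x)) = x - q" using ue by (simp add: algebra_simps)
      have "inner (x - q) (q - x) = t * inner (f - (u + T x)) (q - x)"
        unfolding tf[symmetric] by simp
      then have "0 \<le> inner (x - q) (q - x)" using m t0 by simp
      moreover have "inner (x - q) (q - x) = - inner (x - q) (x - q)"
        by (metis inner_minus_right minus_diff_eq)
      ultimately have "inner (x - q) (x - q) \<le> 0" by simp
      then have "inner (x - q) (x - q) = 0" using inner_ge_zero[of "x - q"] by linarith
      then have "x = q" by simp
      then show "f \<in> op_plus A (sv T) q"
        using \<open>t *\<^sub>R (f - (u + T x)) = x - q\<close> t0 u by (simp add: op_plus_sv_iff)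
    qed
    then show "A' = op_plus A (sv T)" using h by (intro ext) blast
  qed
  then show ?thesis using mS unfolding max_monotone_op_def by blast
qed

lemma bounded_times_null:
  fixes s :: "nat \<Rightarrow> 'a::real_inner"
  assumes s: "s \<longlonglongrightarrow> 0" and bd: "\<And>k. norm (y k) \<le> M"
  shows "(\<lambda>k. inner (s k) (y k)) \<longlonglongrightarrow> 0"
proof -
  have "(\<lambda>k. norm (s k) * M) \<longlonglongrightarrow> 0 * M"
    by (intro tendsto_intros) (simp add: tendsto_norm_zero_iff s)
  then have "(\<lambda>k. norm (s k) * M) \<longlonglongrightarrow> 0" by simp
  moreover have "norm (inner (s k) (y k)) \<le> norm (s k) * M" for k
  proof -
    have "norm (inner (s k) (y k)) \<le> norm (s k) * norm (y k)" by (simp add: Cauchy_Schwarz_ineq2)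
    also have "\<dots> \<le> norm (s k) * M" using bd by (simp add: mult_left_mono)
    finally show ?thesis .
  qed
  ultimately show ?thesis using Lim_null_comparison[where f="\<lambda>k. inner (s k) (y k)" and g="\<lambda>k. norm (s k) * M"]
    by (simp add: always_eventually)
qed

lemma maxmono_demiclosed:
  fixes M :: "'a::real_inner \<Rightarrow> 'a set"
  assumes mm: "max_monotone_op M" and sM: "\<And>k. s k \<in> M (y k)"
    and wk: "weakly_converges y q" and st: "s \<longlonglongrightarrow> 0" and bd: "\<And>k. norm (y k) \<le> B"
  shows "0 \<in> M q"
proof (rule maxmono_add_point[OF mm])
  fix a b assume ab: "b \<in> M a"
  have mM: "monotone_op M" using mm unfolding max_monotone_op_def by simp
  have pos: "0 \<le> inner (s k - b) (y k - a)" for k using mM sM[of k] ab unfolding monotone_op_def by blast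
  have e: "inner (s k - b) (y k - a) = inner (s k) (y k) - inner (s k) a - inner (y k) b + inner b a" for k
    by (simp add: inner_diff_left inner_diff_right inner_commute)
  have "(\<lambda>k. inner (s k) (y k) - inner (s k) a - inner (y k) b + inner b a) \<longlonglongrightarrow> 0 - inner 0 a - inner q b + inner b a"
  proof -
    have t1: "(\<lambda>k. inner (s k) (y k)) \<longlonglongrightarrow> 0" using bounded_times_null[where y=y and M=B, OF st bd] .
    have t2: "(\<lambda>k. inner (s k) a) \<longlonglongrightarrow> inner 0 a" by (intro tendsto_intros st)
    have t3: "(\<lambda>k. inner (y k) b) \<longlonglongrightarrow> inner q b" using wk unfolding weakly_converges_def by blast
    show ?thesis using tendsto_add[OF tendsto_diff[OF tendsto_diff[OF t1 t2] t3] tendsto_const[of "inner b a"]] by simp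
  qed
  then have "(\<lambda>k. inner (s k - b) (y k - a)) \<longlonglongrightarrow> - inner q b + inner b a" unfolding e by simp
  then have "0 \<le> - inner q b + inner b a" using pos by (intro LIMSEQ_le_const) auto
  then show "0 \<le> inner (0 - b) (q - a)" by (simp add: inner_diff_right inner_commute)
qed

lemma weakly_converges_subseq:
  assumes "weakly_converges x p" "strict_mono r"
  shows "weakly_converges (x \<circ> r) p"
  unfolding weakly_converges_def
proof
  fix z
  have "((\<lambda>k. inner (x k) z) \<circ> r) \<longlonglongrightarrow> inner p z"
    using assms unfolding weakly_converges_def by (intro LIMSEQ_subseq_LIMSEQ) auto
  then show "(\<lambda>k. inner ((x \<circ> r) k) z) \<longlonglongrightarrow> inner p z" by (simp add: o_def)
qed

lemma cauchy_from_sq_bound: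
  fixes p :: "nat \<Rightarrow> 'a::real_normed_vector"
  assumes bnd: "\<And>n m. n \<le> m \<Longrightarrow> (norm (p n - p m))\<^sup>2 \<le> c / (real n + 1)" and c0: "c > 0"
  shows "Cauchy p"
proof (rule metric_CauchyI)
  fix r :: real assume r: "r > 0"
  obtain N :: nat where N: "c / r\<^sup>2 < real N" using reals_Archimedean2 by blast
  show "\<exists>N. \<forall>m\<ge>N. \<forall>n\<ge>N. dist (p m) (p n) < r"
  proof (intro exI allI impI)
    fix m n assume m: "N \<le> m" and n: "N \<le> n"
    have key: "(norm (p a - p b))\<^sup>2 < r\<^sup>2" if "N \<le> a" "a \<le> b" for a b
    proof -
      have "c / (real a + 1) \<le> c / (real N + 1)" using that(1) c0 by (simp add: frac_le)
      also have "c / (real N + 1) < r\<^sup>2"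
      proof -
        have "c / r\<^sup>2 < real N + 1" using N by linarith
        then have "c < r\<^sup>2 * (real N + 1)" using r by (simp add: field_simps)
        then show ?thesis by (simp add: field_simps)
      qed
      finally show ?thesis using bnd[OF that(2)] by linarith
    qed
    have "(norm (p m - p n))\<^sup>2 < r\<^sup>2"
    proof (cases "m \<le> n")
      case True then show ?thesis using key[OF m True] by simp
    next
      case False then show ?thesis using key[OF n, of m] by (simp add: norm_minus_commute)
    qed
    then show "dist (p m) (p n) < r" using r by (simp add: dist_norm power_less_imp_less_base)
  qed
qed

lemma e_tendsto: "(\<lambda>n. 1 / (real n + 1)) \<longlonglongrightarrow> 0"
  using LIMSEQ_inverse_real_of_nat by (simp add: inverse_eq_divide add.commute)

lemma riesz_subspace:
  fixes S :: "'a::{real_inner,complete_space} set" and g :: "'a \<Rightarrow> real"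
  assumes sub: "subspace S" and cl: "closed S"
    and gadd: "\<And>u v. u \<in> S \<Longrightarrow> v \<in> S \<Longrightarrow> g (u + v) = g u + g v"
    and gscale: "\<And>c u. u \<in> S \<Longrightarrow> g (c *\<^sub>R u) = c * g u"
    and gbd: "\<And>u. u \<in> S \<Longrightarrow> \<bar>g u\<bar> \<le> K * norm u"
  shows "\<exists>p\<in>S. \<forall>h\<in>S. inner p h = g h"
proof -
  define J where "J u = (norm u)\<^sup>2 / 2 - g u" for u
  have gsub: "g (u - v) = g u - g v" if "u \<in> S" "v \<in> S" for u v
  proof -
    have "(-1) *\<^sub>R v \<in> S" using sub that(2) by (simp add: subspace_neg)
    then have "g (u + (-1) *\<^sub>R v) = g u + g ((-1) *\<^sub>R v)" using gadd that(1) by blast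
    then show ?thesis using gscale[OF that(2), of "-1"] by simp
  qed
  have Jlow: "- (K\<^sup>2) / 2 \<le> J u" if "u \<in> S" for u
  proof -
    have "g u \<le> \<bar>K\<bar> * norm u" using gbd[OF that] by (smt (verit) abs_ge_self mult_right_mono norm_ge_zero)
    moreover have "0 \<le> (norm u - \<bar>K\<bar>)\<^sup>2" by simp
    ultimately show ?thesis unfolding J_def by (simp add: power2_eq_square algebra_simps)
  qed
  have S0: "0 \<in> S" using sub by (simp add: subspace_0)
  have Sne: "J ` S \<noteq> {}" using S0 by blast
  have bddb: "bdd_below (J ` S)" using Jlow by (intro bdd_belowI[of _ "- (K\<^sup>2) / 2"]) auto
  define m where "m = Inf (J ` S)"
  have mle: "m \<le> J u" if "u \<in> S" for u unfolding m_def using bddb that by (intro cInf_lower) auto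
  define e where "e n = 1 / (real n + 1)" for n :: nat
  have e0: "e n > 0" for n unfolding e_def by simp
  have "\<exists>v\<in>S. J v < m + e n" for n
  proof -
    have "Inf (J ` S) < m + e n" using e0[of n] unfolding m_def by simp
    then obtain w where "w \<in> J ` S" "w < m + e n" using cInf_lessD[OF Sne] by blast
    then show ?thesis by blast
  qed
  then obtain v where vS: "\<And>n. v n \<in> S" and vJ: "\<And>n. J (v n) < m + e n" by metis
  have mid: "(norm (a - b))\<^sup>2 \<le> 4 * J a + 4 * J b - 8 * m" if "a \<in> S" "b \<in> S" for a b
  proof -
    have cS: "(1/2) *\<^sub>R (a + b) \<in> S" using sub that by (simp add: subspace_add subspace_scale)
    have gm: "g ((1/2) *\<^sub>R (a + b)) = (g a + g b) / 2" using gscale[OF subspace_add[OF sub that]] gadd[OF that] by simp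
    have "(norm (a - b))\<^sup>2 = 4 * J a + 4 * J b - 8 * J ((1/2) *\<^sub>R (a + b))"
      unfolding J_def gm power2_norm_eq_inner
      by (simp add: inner_add_left inner_add_right inner_diff_left inner_diff_right inner_commute algebra_simps)
         (simp add: field_simps)
    then show ?thesis using mle[OF cS] by simp
  qed
  have vbnd: "(norm (v n - v k))\<^sup>2 \<le> 8 / (real n + 1)" if "n \<le> k" for n k
  proof -
    have "e k \<le> e n" unfolding e_def using that by (simp add: frac_le)
    then have "(norm (v n - v k))\<^sup>2 \<le> 8 * e n" using mid[OF vS vS, of n k] vJ[of n] vJ[of k] by simp
    then show ?thesis unfolding e_def by simp
  qed
  have "Cauchy v" by (rule cauchy_from_sq_bound[where c="8::real"]) (use vbnd in auto)
  then obtain p where vp: "v \<longlonglongrightarrow> p" using Cauchy_convergent_iff convergent_def by blast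
  have pS: "p \<in> S" using cl vS vp closed_sequentially by blast
  have gconv: "(\<lambda>n. g (v n)) \<longlonglongrightarrow> g p"
  proof -
    have "(\<lambda>n. v n - p) \<longlonglongrightarrow> 0" using vp by (simp add: LIM_zero)
    then have "(\<lambda>n. \<bar>K\<bar> * norm (v n - p)) \<longlonglongrightarrow> \<bar>K\<bar> * 0" by (intro tendsto_intros) (simp add: tendsto_norm_zero_iff)
    then have t: "(\<lambda>n. \<bar>K\<bar> * norm (v n - p)) \<longlonglongrightarrow> 0" by simp
    have "norm (g (v n) - g p) \<le> \<bar>K\<bar> * norm (v n - p)" for n
    proof -
      have "norm (g (v n) - g p) = \<bar>g (v n - p)\<bar>" using gsub[OF vS pS] by simp
      also have "\<dots> \<le> K * norm (v n - p)" using gbd sub vS pS by (simp add: subspace_diff)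
      also have "\<dots> \<le> \<bar>K\<bar> * norm (v n - p)" by (simp add: mult_right_mono)
      finally show ?thesis .
    qed
    then have "(\<lambda>n. g (v n) - g p) \<longlonglongrightarrow> 0"
      using Lim_null_comparison[where f="\<lambda>n. g (v n) - g p" and g="\<lambda>n. \<bar>K\<bar> * norm (v n - p)", OF _ t]
      by (simp add: always_eventually)
    then show ?thesis by (simp add: LIM_zero_iff)
  qed
  have Jconv: "(\<lambda>n. J (v n)) \<longlonglongrightarrow> J p" unfolding J_def by (intro tendsto_intros vp gconv) auto
  have "(\<lambda>n. m + e n) \<longlonglongrightarrow> m + 0" unfolding e_def by (intro tendsto_intros e_tendsto)
  then have "J p \<le> m + 0" using Jconv vJ by (intro LIMSEQ_le[OF Jconv]) (auto intro: less_imp_le)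
  then have Jmin: "J p \<le> J w" if "w \<in> S" for w using mle[OF that] by simp
  show ?thesis
  proof (intro bexI[OF _ pS] ballI)
    fix h assume hS: "h \<in> S"
    define d where "d = inner p h - g h"
    define N where "N = (norm h)\<^sup>2 / 2"
    have N0: "N \<ge> 0" unfolding N_def by simp
    have var: "0 \<le> c * d + c\<^sup>2 * N" for c
    proof -
      have pc: "p + c *\<^sub>R h \<in> S" using sub pS hS by (simp add: subspace_add subspace_scale)
      have "g (p + c *\<^sub>R h) = g p + c * g h" using gadd[OF pS] gscale[OF hS] sub hS by (simp add: subspace_scale)
      then have "J (p + c *\<^sub>R h) = J p + (c * d + c\<^sup>2 * N)"
        unfolding J_def d_def N_def power2_norm_eq_inner
        by (simp add: inner_add_left inner_add_right inner_commute power2_eq_square algebra_simps)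
      then show ?thesis using Jmin[OF pc] by simp
    qed
    show "inner p h = g h"
    proof (rule ccontr)
      assume "inner p h \<noteq> g h"
      then have dne: "d \<noteq> 0" unfolding d_def by simp
      define k where "k = 1 / (2 * (N + 1))"
      have k0: "k > 0" unfolding k_def using N0 by simp
      have kN: "k * N < 1" unfolding k_def using N0 by (simp add: field_simps)
      define c where "c = - k * d"
      have "c * d + c\<^sup>2 * N = - (k * d\<^sup>2) * (1 - k * N)"
        unfolding c_def by (simp add: power2_eq_square algebra_simps)
      also have "\<dots> < 0" using dne k0 kN by (intro mult_neg_pos) auto
      finally show False using var[of c] by simp
    qed
  qed
qed

lemma bolzano_real_bounded:
  fixes f :: "nat \<Rightarrow> real"
  assumes "\<And>j. \<bar>f j\<bar> \<le> B"
  shows "\<exists>r. strict_mono r \<and> convergent (f \<circ> r)"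
proof -
  obtain r where r: "strict_mono r" "monoseq (\<lambda>n. f (r n))" using seq_monosub by blast
  have "Bseq (\<lambda>n. f (r n))" using assms by (intro BseqI'[of _ B]) auto
  then have "convergent (\<lambda>n. f (r n))" using r(2) by (rule Bseq_monoseq_convergent)
  then show ?thesis using r(1) by (auto simp: o_def)
qed

lemma weak_seq_compact:
  fixes x :: "nat \<Rightarrow> 'a::{real_inner,complete_space}"
  assumes bd: "\<And>k. norm (x k) \<le> M"
  shows "\<exists>r p. strict_mono r \<and> weakly_converges (x \<circ> r) p"
proof -
  have M0: "0 \<le> M" using bd[of 0] norm_ge_zero[of "x 0"] by linarith
  have ipb: "\<bar>inner (x i) (x n)\<bar> \<le> M * M" for i n
  proof -
    have "\<bar>inner (x i) (x n)\<bar> \<le> norm (x i) * norm (x n)" by (rule Cauchy_Schwarz_ineq2)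
    also have "\<dots> \<le> M * M" using bd M0 by (intro mult_mono) auto
    finally show ?thesis .
  qed
  interpret D: subseqs "\<lambda>n r. convergent (\<lambda>j. inner (x (r j)) (x n))"
  proof
    fix n and s :: "nat \<Rightarrow> nat" assume s: "strict_mono s"
    obtain r' where "strict_mono r'" "convergent ((\<lambda>j. inner (x (s j)) (x n)) \<circ> r')"
      using bolzano_real_bounded[of "\<lambda>j. inner (x (s j)) (x n)" "M * M"] ipb by blast
    then show "\<exists>r'. strict_mono r' \<and> convergent (\<lambda>j. inner (x ((s \<circ> r') j)) (x n))"
      by (auto simp: o_def)
  qed
  define r where "r = D.diagseq"
  have rmono: "strict_mono r" unfolding r_def by (rule D.subseq_diagseq)
  define z where "z j = x (r j)" for j
  have zb: "norm (z j) \<le> M" for j unfolding z_def by (rule bd)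
  have conv_xn: "convergent (\<lambda>j. inner (z j) (x n))" for n
  proof -
    have "convergent (\<lambda>j. inner (x ((D.diagseq \<circ> (+) (Suc n)) j)) (x n))"
    proof (rule D.diagseq_holds)
      fix r' s :: "nat \<Rightarrow> nat" and n :: nat assume h1: "strict_mono r'" and h2: "convergent (\<lambda>j. inner (x (s j)) (x n))"
      have "convergent ((\<lambda>j. inner (x (s j)) (x n)) \<circ> r')" by (rule convergent_subseq_convergent[OF h2 h1])
      then show "convergent (\<lambda>j. inner (x ((s \<circ> r') j)) (x n))" by (simp add: o_def)
    qed
    then have "convergent (\<lambda>j. inner (z (j + Suc n)) (x n))" unfolding z_def r_def by (simp add: o_def add.commute)
    then show ?thesis by (rule convergent_ignore_initial_segment[THEN iffD1])
  qed
  define S where "S = {v. convergent (\<lambda>j. inner (z j) v)}"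
  have zS: "z j \<in> S" for j
  proof -
    have "z j = x (r j)" by (simp add: z_def)
    then show ?thesis unfolding S_def using conv_xn[of "r j"] by simp
  qed
  have sub: "subspace S"
    unfolding subspace_def S_def
  proof (intro conjI ballI allI)
    show "0 \<in> {v. convergent (\<lambda>j. inner (z j) v)}" by (simp add: convergent_const)
  next
    fix u v assume "u \<in> {v. convergent (\<lambda>j. inner (z j) v)}" "v \<in> {v. convergent (\<lambda>j. inner (z j) v)}"
    then show "u + v \<in> {v. convergent (\<lambda>j. inner (z j) v)}" by (simp add: inner_add_right convergent_add)
  next
    fix c :: real and u assume "u \<in> {v. convergent (\<lambda>j. inner (z j) v)}"
    then have "convergent (\<lambda>j. c * inner (z j) u)" by (simp add: convergent_mult_const_iff convergent_const convergent_mult)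
    then show "c *\<^sub>R u \<in> {v. convergent (\<lambda>j. inner (z j) v)}" by simp
  qed
  have cl: "closed S"
    unfolding closed_sequential_limits
  proof (intro allI impI, elim conjE)
    fix w v assume wS: "\<forall>n. w n \<in> S" and wv: "w \<longlonglongrightarrow> v"
    have "Cauchy (\<lambda>j. inner (z j) v)"
    proof (rule metric_CauchyI)
      fix e :: real assume e: "e > 0"
      define e' where "e' = e / (4 * M + 4)"
      have e'0: "e' > 0" unfolding e'_def using e M0 by simp
      obtain n where n: "dist (w n) v < e'" using wv e'0 unfolding LIMSEQ_def by blast
      have "Cauchy (\<lambda>j. inner (z j) (w n))" using wS unfolding S_def by (simp add: convergent_Cauchy)
      then obtain N where N: "\<And>a b. a \<ge> N \<Longrightarrow> b \<ge> N \<Longrightarrow> dist (inner (z a) (w n)) (inner (z b) (w n)) < e / 2"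
        using e unfolding Cauchy_def by (meson half_gt_zero)
      show "\<exists>N. \<forall>a\<ge>N. \<forall>b\<ge>N. dist (inner (z a) v) (inner (z b) v) < e"
      proof (intro exI allI impI)
        fix a b assume a: "a \<ge> N" and b: "b \<ge> N"
        have bz: "\<bar>inner (z c) (v - w n)\<bar> \<le> M * e'" for c
        proof -
          have "\<bar>inner (z c) (v - w n)\<bar> \<le> norm (z c) * norm (v - w n)" by (rule Cauchy_Schwarz_ineq2)
          also have "\<dots> \<le> M * e'" using zb n M0 by (intro mult_mono) (auto simp: dist_norm norm_minus_commute)
          finally show ?thesis .
        qed
        have "M * e' < e / 4" unfolding e'_def using e M0 by (simp add: field_simps)
        moreover have "dist (inner (z a) v) (inner (z b) v) \<le> dist (inner (z a) (w n)) (inner (z b) (w n)) + \<bar>inner (z a) (v - w n)\<bar> + \<bar>inner (z b) (v - w n)\<bar>"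
          unfolding dist_real_def by (simp add: inner_diff_right)
        ultimately show "dist (inner (z a) v) (inner (z b) v) < e" using N[OF a b] bz[of a] bz[of b] by linarith
      qed
    qed
    then show "v \<in> S" unfolding S_def by (simp add: real_Cauchy_convergent)
  qed
  define g where "g v = lim (\<lambda>j. inner (z j) v)" for v
  have gl: "(\<lambda>j. inner (z j) v) \<longlonglongrightarrow> g v" if "v \<in> S" for v
    using that unfolding S_def g_def by (simp add: convergent_LIMSEQ_iff)
  have gadd: "g (u + v) = g u + g v" if "u \<in> S" "v \<in> S" for u v
  proof -
    have "(\<lambda>j. inner (z j) (u + v)) \<longlonglongrightarrow> g u + g v"
      unfolding inner_add_right by (intro tendsto_add gl that)
    moreover have "u + v \<in> S" using sub that by (simp add: subspace_add)
    ultimately show ?thesis using gl LIMSEQ_unique by blast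
  qed
  have gscale: "g (c *\<^sub>R u) = c * g u" if "u \<in> S" for c u
  proof -
    have "(\<lambda>j. inner (z j) (c *\<^sub>R u)) \<longlonglongrightarrow> c * g u"
      unfolding inner_scaleR_right by (intro tendsto_mult tendsto_const gl that)
    moreover have "c *\<^sub>R u \<in> S" using sub that by (simp add: subspace_scale)
    ultimately show ?thesis using gl LIMSEQ_unique by blast
  qed
  have gbd: "\<bar>g u\<bar> \<le> M * norm u" if "u \<in> S" for u
  proof -
    have "(\<lambda>j. \<bar>inner (z j) u\<bar>) \<longlonglongrightarrow> \<bar>g u\<bar>" by (intro tendsto_intros gl that)
    moreover have "\<bar>inner (z j) u\<bar> \<le> M * norm u" for j
    proof -
      have "\<bar>inner (z j) u\<bar> \<le> norm (z j) * norm u" by (rule Cauchy_Schwarz_ineq2)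
      also have "\<dots> \<le> M * norm u" using zb by (intro mult_right_mono) auto
      finally show ?thesis .
    qed
    ultimately show ?thesis by (intro LIMSEQ_le_const2) auto
  qed
  obtain p where pS: "p \<in> S" and pg: "\<And>h. h \<in> S \<Longrightarrow> inner p h = g h"
    using riesz_subspace[OF sub cl gadd gscale gbd] by blast
  have "weakly_converges z p"
    unfolding weakly_converges_def
  proof
    fix w
    obtain s where sS: "s \<in> S" and sw: "\<And>h. h \<in> S \<Longrightarrow> inner s h = inner w h"
      using riesz_subspace[OF sub cl, of "inner w" "norm w"]
      by (auto simp: inner_add_right Cauchy_Schwarz_ineq2)
    have "inner (z j) w = inner (z j) s" for j using sw[OF zS[of j]] by (simp add: inner_commute)
    moreover have "(\<lambda>j. inner (z j) s) \<longlonglongrightarrow> inner p w"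
    proof -
      have "g s = inner p s" using pg[OF sS] by simp
      also have "\<dots> = inner w p" using sw[OF pS] by (simp add: inner_commute)
      finally show ?thesis using gl[OF sS] by (simp add: inner_commute)
    qed
    ultimately show "(\<lambda>j. inner (z j) w) \<longlonglongrightarrow> inner p w" by simp
  qed
  then show ?thesis using rmono unfolding z_def by (auto simp: o_def)
qed

lemma opial:
  fixes x :: "nat \<Rightarrow> 'a::{real_inner,complete_space}" and Z :: "'a set"
  assumes bd: "\<And>k. norm (x k) \<le> M"
    and conv: "\<And>z. z \<in> Z \<Longrightarrow> convergent (\<lambda>k. (norm (x k - z))\<^sup>2)"
    and clus: "\<And>r p. strict_mono r \<Longrightarrow> weakly_converges (x \<circ> r) p \<Longrightarrow> p \<in> Z"
  shows "\<exists>p\<in>Z. weakly_converges x p"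
proof -
  obtain r0 p where r0: "strict_mono r0" and wp: "weakly_converges (x \<circ> r0) p"
    using weak_seq_compact[where x=x and M=M] bd by blast
  have pZ: "p \<in> Z" by (rule clus[OF r0 wp])
  have "weakly_converges x p"
  proof (rule ccontr)
    assume "\<not> weakly_converges x p"
    then obtain w where nw: "\<not> (\<lambda>k. inner (x k) w) \<longlonglongrightarrow> inner p w" unfolding weakly_converges_def by blast
    then obtain e where e: "e > 0" and ee: "\<And>N. \<exists>n\<ge>N. \<not> dist (inner (x n) w) (inner p w) < e"
      unfolding LIMSEQ_def by blast
    define T where "T = {n. e \<le> \<bar>inner (x n) w - inner p w\<bar>}"
    have "infinite T" unfolding infinite_nat_iff_unbounded_le T_def
      using ee by (auto simp: dist_real_def not_less)
    then obtain r1 :: "nat \<Rightarrow> nat" where r1: "strict_mono r1" and r1T: "\<And>n. r1 n \<in> T"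
      using infinite_enumerate by blast
    obtain r2 q where r2: "strict_mono r2" and wq: "weakly_converges ((x \<circ> r1) \<circ> r2) q"
      using weak_seq_compact[where x="x \<circ> r1" and M=M] bd by auto
    have r12: "strict_mono (r1 \<circ> r2)" using r1 r2 by (rule strict_mono_o)
    have wq': "weakly_converges (x \<circ> (r1 \<circ> r2)) q" using wq by (simp add: o_assoc)
    have qZ: "q \<in> Z" by (rule clus[OF r12 wq'])
    have "(\<lambda>j. \<bar>inner (x (r1 (r2 j))) w - inner p w\<bar>) \<longlonglongrightarrow> \<bar>inner q w - inner p w\<bar>"
    proof -
      have "(\<lambda>j. inner (x (r1 (r2 j))) w) \<longlonglongrightarrow> inner q w" using wq' unfolding weakly_converges_def by (auto simp: o_def)
      then show ?thesis by (intro tendsto_rabs tendsto_diff tendsto_const)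
    qed
    moreover have "e \<le> \<bar>inner (x (r1 (r2 j))) w - inner p w\<bar>" for j using r1T[of "r2 j"] unfolding T_def by simp
    ultimately have "e \<le> \<bar>inner q w - inner p w\<bar>" by (intro LIMSEQ_le_const) auto
    then have qp: "q \<noteq> p" using e by auto
    have id: "inner (x k) (q - p) = ((norm (x k - p))\<^sup>2 - (norm (x k - q))\<^sup>2 - (norm p)\<^sup>2 + (norm q)\<^sup>2) / 2" for k
      unfolding power2_norm_eq_inner
      by (simp add: inner_diff_left inner_diff_right inner_commute algebra_simps)
    have "convergent (\<lambda>k. ((norm (x k - p))\<^sup>2 - (norm (x k - q))\<^sup>2 - (norm p)\<^sup>2 + (norm q)\<^sup>2) / 2)"
    proof -
      obtain a where a: "(\<lambda>k. (norm (x k - p))\<^sup>2) \<longlonglongrightarrow> a" using conv[OF pZ] unfolding convergent_def by blast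
      obtain b where b: "(\<lambda>k. (norm (x k - q))\<^sup>2) \<longlonglongrightarrow> b" using conv[OF qZ] unfolding convergent_def by blast
      have "(\<lambda>k. ((norm (x k - p))\<^sup>2 - (norm (x k - q))\<^sup>2 - (norm p)\<^sup>2 + (norm q)\<^sup>2) / 2) \<longlonglongrightarrow> (a - b - (norm p)\<^sup>2 + (norm q)\<^sup>2) / 2"
        by (intro tendsto_intros a b) auto
      then show ?thesis unfolding convergent_def by blast
    qed
    then have "convergent (\<lambda>k. inner (x k) (q - p))" unfolding id .
    then obtain l where l: "(\<lambda>k. inner (x k) (q - p)) \<longlonglongrightarrow> l" unfolding convergent_def by blast
    have "((\<lambda>k. inner (x k) (q - p)) \<circ> r0) \<longlonglongrightarrow> l" using l r0 by (rule LIMSEQ_subseq_LIMSEQ)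
    moreover have "((\<lambda>k. inner (x k) (q - p)) \<circ> r0) \<longlonglongrightarrow> inner p (q - p)"
      using wp unfolding weakly_converges_def by (simp add: o_def)
    ultimately have l1: "l = inner p (q - p)" using LIMSEQ_unique by blast
    have "((\<lambda>k. inner (x k) (q - p)) \<circ> (r1 \<circ> r2)) \<longlonglongrightarrow> l" using l r12 by (rule LIMSEQ_subseq_LIMSEQ)
    moreover have "((\<lambda>k. inner (x k) (q - p)) \<circ> (r1 \<circ> r2)) \<longlonglongrightarrow> inner q (q - p)"
      using wq' unfolding weakly_converges_def by (simp add: o_def)
    ultimately have l2: "l = inner q (q - p)" using LIMSEQ_unique by blast
    have "inner (q - p) (q - p) = 0" using l1 l2 by (simp add: inner_diff_left)
    then show False using qp by simp
  qed
  then show ?thesis using pZ by blast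
qed

lemma idA:
  fixes Y z dk e :: "'a::real_inner"
  shows "(norm ((Y - e) - z))\<^sup>2 = (norm ((Y + dk) - z))\<^sup>2 - (norm dk)\<^sup>2 + (norm e)\<^sup>2 - 2 * inner ((Y + dk) - (Y - e)) (Y - z)"
  unfolding power2_norm_eq_inner
  by (simp add: inner_add_left inner_add_right inner_diff_left inner_diff_right inner_commute algebra_simps)

lemma coco_bound:
  fixes g b t s :: real
  assumes "g > 0" "b > 0"
  shows "2 * g * t * s - 2 * g * t\<^sup>2 / b \<le> g * b * s\<^sup>2 / 2"
proof -
  have "g * b * s\<^sup>2 / 2 - (2 * g * t * s - 2 * g * t\<^sup>2 / b) = g * (b * s - 2 * t)\<^sup>2 / (2 * b)"
    using assms by (simp add: field_simps power2_eq_square)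
  moreover have "0 \<le> g * (b * s - 2 * t)\<^sup>2 / (2 * b)" using assms by simp
  ultimately show ?thesis by linarith
qed

lemma lyap_step:
  fixes X Y X' Yp Xp z u BX BY Bz CX Cz A2X A2Y A2Xp A2Yp BXp BYp :: "'a::real_inner"
    and \<gamma> L \<mu> \<beta> :: real
  assumes F1: "\<gamma> *\<^sub>R u = (X - Y) - \<gamma> *\<^sub>R BX - \<gamma> *\<^sub>R CX + \<gamma> *\<^sub>R (A2Y - A2X) - \<gamma> *\<^sub>R (A2Yp - A2Xp)"
    and F2: "0 \<le> inner (u - (- Bz - Cz)) (Y - z)"
    and F3: "0 \<le> inner (BY - Bz) (Y - z)"
    and F4: "X' = Y - \<gamma> *\<^sub>R BY + \<gamma> *\<^sub>R BX"
    and F5: "X = Yp - \<gamma> *\<^sub>R BYp + \<gamma> *\<^sub>R BXp"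
    and F6: "norm (BY - BX) \<le> \<mu> * norm (X - Y)"
    and F6': "norm (BXp - BYp) \<le> \<mu> * norm (Xp - Yp)"
    and F7: "norm (A2Yp - A2Xp) \<le> L * norm (Xp - Yp)"
    and F8: "inner (CX - Cz) (X - z) \<ge> inverse \<beta> * (norm (CX - Cz))\<^sup>2"
    and g0: "\<gamma> > 0" and b0: "\<beta> > 0" and L0: "L \<ge> 0" and m0: "\<mu> \<ge> 0"
  shows "(norm (X' - z))\<^sup>2 - 2 * \<gamma> * inner (A2Y - A2X) (Y - z)
     \<le> (norm (X - z))\<^sup>2 - 2 * \<gamma> * inner (A2Yp - A2Xp) (Yp - z)
        - (1 - \<gamma>\<^sup>2 * \<mu>\<^sup>2 - \<gamma> * \<beta> / 2 - \<gamma> * L) * (norm (X - Y))\<^sup>2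
        + (\<gamma> * L + 2 * \<gamma>\<^sup>2 * L * \<mu>) * (norm (Xp - Yp))\<^sup>2"
proof -
  define dk where "dk = X - Y"
  define dn where "dn = Xp - Yp"
  define ak where "ak = A2Y - A2X"
  define an where "an = A2Yp - A2Xp"
  define e where "e = \<gamma> *\<^sub>R (BY - BX)"
  define cc where "cc = CX - Cz"
  define P where "P = (norm (X' - z))\<^sup>2"
  define Q where "Q = (norm (X - z))\<^sup>2"
  define Dk where "Dk = (norm dk)\<^sup>2"
  define Dn where "Dn = (norm dn)\<^sup>2"
  define E where "E = (norm e)\<^sup>2"
  define I1 where "I1 = inner (X - X') (Y - z)"
  define I2 where "I2 = inner cc (Y - z)"
  define I3 where "I3 = inner (ak - an) (Y - z)"
  define Ik where "Ik = inner ak (Y - z)"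
  define In where "In = inner an (Yp - z)"
  define I4 where "I4 = inner an (Y - Yp)"
  have X'e: "X' = Y - e" unfolding e_def F4 by (simp add: algebra_simps)
  have Xd: "X = Y + dk" unfolding dk_def by simp
  have A: "P = Q - Dk + E - 2 * I1"
    unfolding P_def Q_def Dk_def E_def I1_def using idA[of Y e z dk] unfolding X'e[symmetric] Xd[symmetric] by simp
  have eqB: "X - X' = \<gamma> *\<^sub>R (u - (- Bz - Cz)) + \<gamma> *\<^sub>R (BY - Bz) + \<gamma> *\<^sub>R cc - \<gamma> *\<^sub>R (ak - an)"
  proof -
    have "\<gamma> *\<^sub>R (u - (- Bz - Cz)) = \<gamma> *\<^sub>R u + \<gamma> *\<^sub>R Bz + \<gamma> *\<^sub>R Cz" by (simp add: algebra_simps)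
    then show ?thesis unfolding F1 F4 cc_def ak_def an_def by (simp add: algebra_simps)
  qed
  have B: "I1 \<ge> \<gamma> * I2 - \<gamma> * I3"
  proof -
    have "I1 = \<gamma> * inner (u - (- Bz - Cz)) (Y - z) + \<gamma> * inner (BY - Bz) (Y - z) + \<gamma> * I2 - \<gamma> * I3"
      unfolding I1_def I2_def I3_def eqB by (simp add: inner_add_left inner_diff_left)
    moreover have "0 \<le> \<gamma> * inner (u - (- Bz - Cz)) (Y - z)" using F2 g0 by simp
    moreover have "0 \<le> \<gamma> * inner (BY - Bz) (Y - z)" using F3 g0 by simp
    ultimately show ?thesis by linarith
  qed
  have C: "E \<le> \<gamma>\<^sup>2 * \<mu>\<^sup>2 * Dk"
  proof -
    have "norm e = \<gamma> * norm (BY - BX)" unfolding e_def using g0 by simp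
    also have "\<dots> \<le> \<gamma> * (\<mu> * norm dk)" using F6 g0 unfolding dk_def by simp
    finally have "norm e \<le> \<gamma> * \<mu> * norm dk" by simp
    then have "(norm e)\<^sup>2 \<le> (\<gamma> * \<mu> * norm dk)\<^sup>2" by (intro power_mono) auto
    then show ?thesis unfolding E_def Dk_def by (simp add: power_mult_distrib)
  qed
  have D: "- 2 * \<gamma> * I2 \<le> \<gamma> * \<beta> / 2 * Dk"
  proof -
    have hI2: "I2 = inner cc (X - z) - inner cc dk" unfolding I2_def dk_def by (simp add: inner_diff_right)
    have "inner cc (X - z) \<ge> (norm cc)\<^sup>2 / \<beta>" using F8 unfolding cc_def by (simp add: field_simps)
    moreover have "inner cc dk \<le> norm cc * norm dk" by (rule norm_cauchy_schwarz)
    moreover note hI2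
    ultimately have hcc: "(norm cc)\<^sup>2 / \<beta> \<le> inner cc (X - z)" and hcs: "inner cc dk \<le> norm cc * norm dk"
      and hI2': "I2 = inner cc (X - z) - inner cc dk" by auto
    define A1 where "A1 = \<gamma> * inner cc dk"
    define A2 where "A2 = \<gamma> * inner cc (X - z)"
    define W1 where "W1 = \<gamma> * (norm cc * norm dk)"
    define W2 where "W2 = \<gamma> * ((norm cc)\<^sup>2 / \<beta>)"
    define R where "R = \<gamma> * \<beta> * (norm dk)\<^sup>2 / 2"
    have e1: "- 2 * \<gamma> * I2 = 2 * A1 - 2 * A2" unfolding hI2' A1_def A2_def by (simp add: algebra_simps)
    have h1: "W2 \<le> A2" unfolding W2_def A2_def using hcc g0 by (intro mult_left_mono) auto
    have h2: "A1 \<le> W1" unfolding W1_def A1_def using hcs g0 by (intro mult_left_mono) auto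
    have cb: "2 * \<gamma> * norm cc * norm dk - 2 * \<gamma> * (norm cc)\<^sup>2 / \<beta> \<le> R"
      unfolding R_def by (rule coco_bound[OF g0 b0])
    have e2: "2 * \<gamma> * norm cc * norm dk - 2 * \<gamma> * (norm cc)\<^sup>2 / \<beta> = 2 * W1 - 2 * W2"
      unfolding W1_def W2_def by (simp add: algebra_simps)
    have "- 2 * \<gamma> * I2 \<le> R" using e1 h1 h2 cb e2 by linarith
    then show ?thesis unfolding Dk_def R_def by (simp add: algebra_simps)
  qed
  have E': "I3 = Ik - In - I4"
  proof -
    have "Y - z = (Yp - z) + (Y - Yp)" by simp
    then have "inner an (Y - z) = In + I4" unfolding In_def I4_def by (metis inner_add_right)
    then show ?thesis unfolding I3_def Ik_def by (simp add: inner_diff_left)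
  qed
  have F: "- 2 * \<gamma> * I4 \<le> \<gamma> * L * Dn + \<gamma> * L * Dk + 2 * \<gamma>\<^sup>2 * L * \<mu> * Dn"
  proof -
    have YY: "Y - Yp = - dk + \<gamma> *\<^sub>R (BXp - BYp)"
      unfolding dk_def using F5 by (simp add: algebra_simps)
    have nYY: "norm (Y - Yp) \<le> norm dk + \<gamma> * \<mu> * norm dn"
    proof -
      have "norm (Y - Yp) \<le> norm (- dk) + norm (\<gamma> *\<^sub>R (BXp - BYp))" unfolding YY by (rule norm_triangle_ineq)
      also have "\<dots> = norm dk + \<gamma> * norm (BXp - BYp)" using g0 by simp
      also have "\<dots> \<le> norm dk + \<gamma> * (\<mu> * norm dn)" using F6' g0 unfolding dn_def by simp
      finally show ?thesis by simp
    qed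
    have "\<bar>I4\<bar> \<le> norm an * norm (Y - Yp)" unfolding I4_def by (rule Cauchy_Schwarz_ineq2)
    also have "\<dots> \<le> (L * norm dn) * (norm dk + \<gamma> * \<mu> * norm dn)"
      using F7 nYY L0 unfolding an_def dn_def by (intro mult_mono) auto
    finally have i4: "\<bar>I4\<bar> \<le> L * norm dn * norm dk + \<gamma> * L * \<mu> * (norm dn)\<^sup>2"
      by (simp add: algebra_simps power2_eq_square)
    have ab: "2 * (norm dn * norm dk) \<le> (norm dn)\<^sup>2 + (norm dk)\<^sup>2"
      using sum_squares_bound[of "norm dn" "norm dk"] by simp
    have "- 2 * \<gamma> * I4 \<le> 2 * \<gamma> * \<bar>I4\<bar>" using g0 by (simp add: abs_if)
    also have "\<dots> \<le> 2 * \<gamma> * (L * norm dn * norm dk + \<gamma> * L * \<mu> * (norm dn)\<^sup>2)" using i4 g0 by simp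
    also have "\<dots> = \<gamma> * L * (2 * (norm dn * norm dk)) + 2 * \<gamma>\<^sup>2 * L * \<mu> * (norm dn)\<^sup>2"
      by (simp add: algebra_simps power2_eq_square)
    also have "\<dots> \<le> \<gamma> * L * ((norm dn)\<^sup>2 + (norm dk)\<^sup>2) + 2 * \<gamma>\<^sup>2 * L * \<mu> * (norm dn)\<^sup>2"
      using ab g0 L0 by (simp add: mult_left_mono)
    finally show ?thesis unfolding Dn_def Dk_def by (simp add: algebra_simps)
  qed
  have "P - 2 * \<gamma> * Ik \<le> Q - 2 * \<gamma> * In - (1 - \<gamma>\<^sup>2 * \<mu>\<^sup>2 - \<gamma> * \<beta> / 2 - \<gamma> * L) * Dk + (\<gamma> * L + 2 * \<gamma>\<^sup>2 * L * \<mu>) * Dn"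
  proof -
    have "P \<le> Q - Dk + E - 2 * (\<gamma> * I2 - \<gamma> * I3)" using A B by (simp add: algebra_simps)
    also have "\<dots> = Q - Dk + E - 2 * \<gamma> * I2 + 2 * \<gamma> * Ik - 2 * \<gamma> * In - 2 * \<gamma> * I4"
      unfolding E' by (simp add: algebra_simps)
    finally have "P \<le> Q - Dk + E - 2 * \<gamma> * I2 + 2 * \<gamma> * Ik - 2 * \<gamma> * In - 2 * \<gamma> * I4" .
    with C D F show ?thesis by (simp add: algebra_simps power2_eq_square)
  qed
  then show ?thesis unfolding P_def Q_def Ik_def In_def Dk_def Dn_def ak_def an_def dk_def dn_def .
qed

lemma lyap_lower:
  fixes X Xp Yp z BXp BYp an :: "'a::real_inner" and \<gamma> L \<mu> :: real
  assumes F5: "X = Yp - \<gamma> *\<^sub>R BYp + \<gamma> *\<^sub>R BXp"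
    and F6': "norm (BXp - BYp) \<le> \<mu> * norm (Xp - Yp)"
    and F7: "norm an \<le> L * norm (Xp - Yp)"
    and g0: "\<gamma> > 0" and L0: "L \<ge> 0" and m0: "\<mu> \<ge> 0"
  shows "\<bar>inner an (Yp - z)\<bar> \<le> L * norm (Xp - Yp) * (norm (X - z) + \<gamma> * \<mu> * norm (Xp - Yp))"
    and "2 * \<gamma> * \<bar>inner an (Yp - z)\<bar> \<le> \<gamma> * L * (norm (X - z))\<^sup>2 + (\<gamma> * L + 2 * \<gamma>\<^sup>2 * L * \<mu>) * (norm (Xp - Yp))\<^sup>2"
proof -
  define dn where "dn = Xp - Yp"
  have "Yp - z = (X - z) + \<gamma> *\<^sub>R (BYp - BXp)" using F5 by (simp add: algebra_simps)
  then have "norm (Yp - z) \<le> norm (X - z) + norm (\<gamma> *\<^sub>R (BYp - BXp))" by (metis norm_triangle_ineq)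
  also have "norm (\<gamma> *\<^sub>R (BYp - BXp)) = \<gamma> * norm (BXp - BYp)" using g0 by (simp add: norm_minus_commute)
  also have "\<gamma> * norm (BXp - BYp) \<le> \<gamma> * (\<mu> * norm dn)" using F6' g0 unfolding dn_def by simp
  finally have nY: "norm (Yp - z) \<le> norm (X - z) + \<gamma> * \<mu> * norm dn" by simp
  have "\<bar>inner an (Yp - z)\<bar> \<le> norm an * norm (Yp - z)" by (rule Cauchy_Schwarz_ineq2)
  also have "\<dots> \<le> (L * norm dn) * (norm (X - z) + \<gamma> * \<mu> * norm dn)"
    using F7 nY L0 unfolding dn_def by (intro mult_mono) auto
  finally show i1: "\<bar>inner an (Yp - z)\<bar> \<le> L * norm (Xp - Yp) * (norm (X - z) + \<gamma> * \<mu> * norm (Xp - Yp))"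
    unfolding dn_def .
  define a where "a = norm dn"
  define b where "b = norm (X - z)"
  have ab: "2 * (a * b) \<le> a\<^sup>2 + b\<^sup>2" using sum_squares_bound[of a b] by simp
  have "2 * \<gamma> * \<bar>inner an (Yp - z)\<bar> \<le> 2 * \<gamma> * (L * a * (b + \<gamma> * \<mu> * a))"
    using i1 g0 unfolding a_def b_def dn_def by simp
  also have "\<dots> = \<gamma> * L * (2 * (a * b)) + 2 * \<gamma>\<^sup>2 * L * \<mu> * a\<^sup>2" by (simp add: algebra_simps power2_eq_square)
  also have "\<dots> \<le> \<gamma> * L * (a\<^sup>2 + b\<^sup>2) + 2 * \<gamma>\<^sup>2 * L * \<mu> * a\<^sup>2"
    using ab g0 L0 by (simp add: mult_left_mono)
  also have "\<dots> = \<gamma> * L * b\<^sup>2 + (\<gamma> * L + 2 * \<gamma>\<^sup>2 * L * \<mu>) * a\<^sup>2" by (simp add: algebra_simps)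
  finally show "2 * \<gamma> * \<bar>inner an (Yp - z)\<bar> \<le> \<gamma> * L * (norm (X - z))\<^sup>2 + (\<gamma> * L + 2 * \<gamma>\<^sup>2 * L * \<mu>) * (norm (Xp - Yp))\<^sup>2"
    unfolding a_def b_def dn_def .
qed
lemma norm5:
  fixes a b c e f :: "'a::real_normed_vector"
  shows "norm (a + b + c + e - f) \<le> norm a + norm b + norm c + norm e + norm f"
proof -
  have "norm (a + b + c + e - f) \<le> norm (a + b + c + e) + norm f" by (rule norm_triangle_ineq4)
  also have "norm (a + b + c + e) \<le> norm (a + b + c) + norm e" by (rule norm_triangle_ineq)
  also have "norm (a + b + c) \<le> norm (a + b) + norm c" by (rule norm_triangle_ineq)
  also have "norm (a + b) \<le> norm a + norm b" by (rule norm_triangle_ineq)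
  finally show ?thesis by simp
qed

theorem mainTheorem4:
  fixes A1 :: "'a::{real_inner,complete_space} \<Rightarrow> 'a set"
    and A2 B C :: "'a \<Rightarrow> 'a"
    and L \<mu> \<beta> \<gamma> \<epsilon> :: real
    and xm1 ym1 :: 'a
    and x y :: "nat \<Rightarrow> 'a"
  assumes A1: "max_monotone_op A1"
    and A2: "L-lipschitz_on UNIV A2"
    and A12: "max_monotone_op (op_plus A1 (sv A2))"
    and Bmono: "monotone_op (sv B)"
    and Blip: "\<mu>-lipschitz_on UNIV B"
    and beta: "\<beta> > 0"
    and Ccoc: "cocoercive (inverse \<beta>) C"
    and zne: "zer (op_plus (op_plus (op_plus A1 (sv A2)) (sv B)) (sv C)) \<noteq> {}"
    and gam: "\<gamma> > 0" and eps: "\<epsilon> > 0"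
    and step: "1 - 2*\<gamma>*L - 2*\<gamma>^2*L*\<mu> - \<gamma>^2*\<mu>^2 - \<gamma>*\<beta>/2 \<ge> \<epsilon>"
    and yrec: "\<And>k. y k \<in> resolvent \<gamma> A1
        (x k - \<gamma> *\<^sub>R A2 (x k) - \<gamma> *\<^sub>R B (x k) - \<gamma> *\<^sub>R C (x k)
         - \<gamma> *\<^sub>R (A2 (if k = 0 then ym1 else y (k - 1)) - A2 (if k = 0 then xm1 else x (k - 1))))"
    and xrec: "\<And>k. x (Suc k) = y k - \<gamma> *\<^sub>R B (y k) + \<gamma> *\<^sub>R B (x k)"
  shows "\<exists>p \<in> zer (op_plus (op_plus (op_plus A1 (sv A2)) (sv B)) (sv C)). weakly_converges x p"
proof -
  have L0: "L \<ge> 0" and A2L: "\<And>a b. norm (A2 a - A2 b) \<le> L * norm (a - b)"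
    using A2 unfolding lipschitz_on_def dist_norm by auto
  have m0: "\<mu> \<ge> 0" and BL: "\<And>a b. norm (B a - B b) \<le> \<mu> * norm (a - b)"
    using Blip unfolding lipschitz_on_def dist_norm by auto
  have Bm: "\<And>a b. 0 \<le> inner (B a - B b) (a - b)" using Bmono unfolding monotone_op_def sv_def by auto
  have Cc: "\<And>a b. inverse \<beta> * (norm (C a - C b))\<^sup>2 \<le> inner (C a - C b) (a - b)"
    using Ccoc unfolding cocoercive_def by auto
  have Cm: "0 \<le> inner (C a - C b) (a - b)" for a b
  proof -
    have "0 \<le> inverse \<beta> * (norm (C a - C b))\<^sup>2" using beta by simp
    then show ?thesis using Cc[of a b] by linarith
  qed
  have CL: "norm (C a - C b) \<le> \<beta> * norm (a - b)" for a b
  proof (cases "norm (C a - C b) = 0")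
    case True then show ?thesis using beta by simp
  next
    case False
    then have N: "norm (C a - C b) > 0" by simp
    have "inverse \<beta> * (norm (C a - C b))\<^sup>2 \<le> norm (C a - C b) * norm (a - b)"
      using Cc[of a b] norm_cauchy_schwarz[of "C a - C b" "a - b"] by linarith
    then have "norm (C a - C b) * (inverse \<beta> * norm (C a - C b)) \<le> norm (C a - C b) * norm (a - b)"
      by (simp add: power2_eq_square algebra_simps)
    then have "inverse \<beta> * norm (C a - C b) \<le> norm (a - b)" using N by (simp add: mult_le_cancel_left_pos)
    then show ?thesis using beta by (simp add: field_simps)
  qed
  have Clip: "\<beta>-lipschitz_on UNIV C" unfolding lipschitz_on_def dist_norm using CL beta by auto
  have Cmono: "monotone_op (sv C)" unfolding monotone_op_def sv_def using Cm by auto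
  have gL: "\<gamma> * L < 1/2"
  proof -
    have "0 \<le> 2 * \<gamma>^2 * L * \<mu>" using L0 m0 by simp
    moreover have "0 \<le> \<gamma>^2 * \<mu>^2" by simp
    moreover have "0 < \<gamma> * \<beta> / 2" using gam beta by simp
    ultimately show ?thesis using step eps by linarith
  qed
  define M12 where "M12 = op_plus A1 (sv A2)"
  define Mf where "Mf = op_plus (op_plus M12 (sv B)) (sv C)"
  have Mfmax: "max_monotone_op Mf"
    unfolding Mf_def M12_def by (intro sum_maxmono[OF _ Cmono Clip] sum_maxmono[OF A12 Bmono Blip])
  have m12: "monotone_op M12" using A12 unfolding M12_def max_monotone_op_def by simp
  have zerI: "z \<in> zer Mf \<longleftrightarrow> - B z - C z \<in> M12 z" for z
  proof -
    have e: "- C z - B z = - B z - C z" by (simp add: algebra_simps)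
    show ?thesis unfolding zer_def Mf_def mem_Collect_eq op_plus_sv_iff diff_0 e by (rule refl)
  qed
  define xp where "xp k = (if k = 0 then xm1 else x (k - 1))" for k
  define yp where "yp k = (if k = 0 then ym1 else y (k - 1))" for k
  have "\<forall>k. \<exists>w. w \<in> A1 (y k) \<and> x k - \<gamma> *\<^sub>R A2 (x k) - \<gamma> *\<^sub>R B (x k) - \<gamma> *\<^sub>R C (x k)
         - \<gamma> *\<^sub>R (A2 (yp k) - A2 (xp k)) = y k + \<gamma> *\<^sub>R w"
    using yrec unfolding resolvent_def xp_def yp_def by blast
  from choice[OF this] obtain v where v: "\<And>k. v k \<in> A1 (y k)"
    and vW: "\<And>k. x k - \<gamma> *\<^sub>R A2 (x k) - \<gamma> *\<^sub>R B (x k) - \<gamma> *\<^sub>R C (x k)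
         - \<gamma> *\<^sub>R (A2 (yp k) - A2 (xp k)) = y k + \<gamma> *\<^sub>R v k" by blast
  define u where "u k = v k + A2 (y k)" for k
  have uM: "u k \<in> M12 (y k)" for k unfolding M12_def u_def by (simp add: op_plus_sv_iff v)
  have F1: "\<gamma> *\<^sub>R u k = (x k - y k) - \<gamma> *\<^sub>R B (x k) - \<gamma> *\<^sub>R C (x k) + \<gamma> *\<^sub>R (A2 (y k) - A2 (x k))
      - \<gamma> *\<^sub>R (A2 (yp k) - A2 (xp k))" for k
  proof -
    have "\<gamma> *\<^sub>R v k = x k - \<gamma> *\<^sub>R A2 (x k) - \<gamma> *\<^sub>R B (x k) - \<gamma> *\<^sub>R C (x k)
         - \<gamma> *\<^sub>R (A2 (yp k) - A2 (xp k)) - y k" using vW[of k] by (simp add: algebra_simps)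
    then show ?thesis unfolding u_def scaleR_add_right by (simp add: algebra_simps)
  qed
  define d where "d k = x k - y k" for k
  define c1 where "c1 = \<gamma> * L + 2 * \<gamma>\<^sup>2 * L * \<mu>"
  have c10: "c1 \<ge> 0" unfolding c1_def using gam L0 m0 by simp
  define \<Phi> where "\<Phi> z n = (norm (x (Suc n) - z))\<^sup>2 - 2 * \<gamma> * inner (A2 (y n) - A2 (x n)) (y n - z) + c1 * (norm (d n))\<^sup>2" for z n
  have stepK: "\<epsilon> \<le> (1 - \<gamma>\<^sup>2 * \<mu>\<^sup>2 - \<gamma> * \<beta> / 2 - \<gamma> * L) - c1"
    using step unfolding c1_def by (simp add: algebra_simps)
  have descent: "\<Phi> z (Suc n) \<le> \<Phi> z n - \<epsilon> * (norm (d (Suc n)))\<^sup>2" if zZ: "- B z - C z \<in> M12 z" for z n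
  proof -
    have F1': "\<gamma> *\<^sub>R u (Suc n) = (x (Suc n) - y (Suc n)) - \<gamma> *\<^sub>R B (x (Suc n)) - \<gamma> *\<^sub>R C (x (Suc n))
       + \<gamma> *\<^sub>R (A2 (y (Suc n)) - A2 (x (Suc n))) - \<gamma> *\<^sub>R (A2 (y n) - A2 (x n))"
      using F1[of "Suc n"] unfolding xp_def yp_def by simp
    have F2: "0 \<le> inner (u (Suc n) - (- B z - C z)) (y (Suc n) - z)"
      using m12 uM[of "Suc n"] zZ unfolding monotone_op_def by blast
    have F6: "norm (B (y (Suc n)) - B (x (Suc n))) \<le> \<mu> * norm (x (Suc n) - y (Suc n))"
      using BL[of "y (Suc n)" "x (Suc n)"] by (simp add: norm_minus_commute)
    have F7: "norm (A2 (y n) - A2 (x n)) \<le> L * norm (x n - y n)"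
      using A2L[of "y n" "x n"] by (simp add: norm_minus_commute)
    have LS: "(norm (x (Suc (Suc n)) - z))\<^sup>2 - 2 * \<gamma> * inner (A2 (y (Suc n)) - A2 (x (Suc n))) (y (Suc n) - z)
     \<le> (norm (x (Suc n) - z))\<^sup>2 - 2 * \<gamma> * inner (A2 (y n) - A2 (x n)) (y n - z)
        - (1 - \<gamma>\<^sup>2 * \<mu>\<^sup>2 - \<gamma> * \<beta> / 2 - \<gamma> * L) * (norm (x (Suc n) - y (Suc n)))\<^sup>2
        + c1 * (norm (x n - y n))\<^sup>2"
      unfolding c1_def
      by (rule lyap_step[OF F1' F2 Bm xrec[of "Suc n"] xrec[of n] F6 BL F7 Cc gam beta L0 m0])
    have "\<epsilon> * (norm (d (Suc n)))\<^sup>2 \<le> ((1 - \<gamma>\<^sup>2 * \<mu>\<^sup>2 - \<gamma> * \<beta> / 2 - \<gamma> * L) - c1) * (norm (d (Suc n)))\<^sup>2"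
      using stepK by (intro mult_right_mono) auto
    then show ?thesis using LS unfolding \<Phi>_def d_def by (simp add: algebra_simps)
  qed
  have absI: "\<bar>inner (A2 (y n) - A2 (x n)) (y n - z)\<bar> \<le> L * norm (d n) * (norm (x (Suc n) - z) + \<gamma> * \<mu> * norm (d n))"
    and lowI: "2 * \<gamma> * \<bar>inner (A2 (y n) - A2 (x n)) (y n - z)\<bar> \<le> \<gamma> * L * (norm (x (Suc n) - z))\<^sup>2 + c1 * (norm (d n))\<^sup>2"
    for z n
  proof -
    have F7: "norm (A2 (y n) - A2 (x n)) \<le> L * norm (x n - y n)"
      using A2L[of "y n" "x n"] by (simp add: norm_minus_commute)
    note ll = lyap_lower[OF xrec[of n] BL F7 gam L0 m0, of z]
    show "\<bar>inner (A2 (y n) - A2 (x n)) (y n - z)\<bar> \<le> L * norm (d n) * (norm (x (Suc n) - z) + \<gamma> * \<mu> * norm (d n))"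
      using ll(1) unfolding d_def .
    show "2 * \<gamma> * \<bar>inner (A2 (y n) - A2 (x n)) (y n - z)\<bar> \<le> \<gamma> * L * (norm (x (Suc n) - z))\<^sup>2 + c1 * (norm (d n))\<^sup>2"
      using ll(2) unfolding d_def c1_def .
  qed
  have lower: "(1/2) * (norm (x (Suc n) - z))\<^sup>2 \<le> \<Phi> z n" for z n
  proof -
    have "- (2 * \<gamma> * \<bar>inner (A2 (y n) - A2 (x n)) (y n - z)\<bar>) \<le> - 2 * \<gamma> * inner (A2 (y n) - A2 (x n)) (y n - z)"
      using gam by (simp add: abs_if)
    moreover have "\<gamma> * L * (norm (x (Suc n) - z))\<^sup>2 \<le> (1/2) * (norm (x (Suc n) - z))\<^sup>2"
      using gL by (intro mult_right_mono) auto
    ultimately show ?thesis using lowI[of n z] unfolding \<Phi>_def by linarith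
  qed
  have Phi_conv: "\<exists>l. (\<lambda>n. \<Phi> z n) \<longlonglongrightarrow> l" and Phi_dec: "\<Phi> z n \<le> \<Phi> z 0"
    if zZ: "- B z - C z \<in> M12 z" for z n
  proof -
    have dec: "decseq (\<Phi> z)" unfolding decseq_Suc_iff
    proof
      fix n have "0 \<le> \<epsilon> * (norm (d (Suc n)))\<^sup>2" using eps by simp
      then show "\<Phi> z (Suc n) \<le> \<Phi> z n" using descent[OF zZ, of n] by linarith
    qed
    have lb: "\<forall>i. 0 \<le> \<Phi> z i"
    proof
      fix i have "0 \<le> (1/2) * (norm (x (Suc i) - z))\<^sup>2" by simp
      then show "0 \<le> \<Phi> z i" using lower[of i z] by linarith
    qed
    obtain l where "(\<Phi> z) \<longlonglongrightarrow> l" using decseq_convergent[OF dec lb] by blast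
    then show "\<exists>l. (\<lambda>n. \<Phi> z n) \<longlonglongrightarrow> l" by blast
    show "\<Phi> z n \<le> \<Phi> z 0" using dec unfolding decseq_def by simp
  qed
  obtain z0 where z0: "z0 \<in> zer Mf" using zne unfolding Mf_def M12_def by blast
  have z0Z: "- B z0 - C z0 \<in> M12 z0" using z0 zerI by blast
  have dnorm: "(\<lambda>n. norm (d n)) \<longlonglongrightarrow> 0"
  proof -
    obtain l where l: "(\<lambda>n. \<Phi> z0 n) \<longlonglongrightarrow> l" using Phi_conv[OF z0Z] by blast
    have "(\<lambda>n. (\<Phi> z0 n - \<Phi> z0 (Suc n)) / \<epsilon>) \<longlonglongrightarrow> (l - l) / \<epsilon>"
      by (intro tendsto_intros l LIMSEQ_Suc[OF l]) (use eps in auto)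
    then have t: "(\<lambda>n. (\<Phi> z0 n - \<Phi> z0 (Suc n)) / \<epsilon>) \<longlonglongrightarrow> 0" by simp
    have "(\<lambda>n. (norm (d (Suc n)))\<^sup>2) \<longlonglongrightarrow> 0"
    proof (rule real_tendsto_sandwich[OF _ _ tendsto_const t])
      show "\<forall>\<^sub>F n in sequentially. 0 \<le> (norm (d (Suc n)))\<^sup>2" by simp
      show "\<forall>\<^sub>F n in sequentially. (norm (d (Suc n)))\<^sup>2 \<le> (\<Phi> z0 n - \<Phi> z0 (Suc n)) / \<epsilon>"
      proof (rule always_eventually, rule allI)
        fix n
        have "\<epsilon> * (norm (d (Suc n)))\<^sup>2 \<le> \<Phi> z0 n - \<Phi> z0 (Suc n)" using descent[OF z0Z, of n] by linarith
        then show "(norm (d (Suc n)))\<^sup>2 \<le> (\<Phi> z0 n - \<Phi> z0 (Suc n)) / \<epsilon>" using eps by (simp add: field_simps)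
      qed
    qed
    then have "(\<lambda>n. (norm (d n))\<^sup>2) \<longlonglongrightarrow> 0" by (rule LIMSEQ_imp_Suc)
    then have "(\<lambda>n. sqrt ((norm (d n))\<^sup>2)) \<longlonglongrightarrow> sqrt 0" by (intro tendsto_intros)
    then show ?thesis by simp
  qed
  have d0: "d \<longlonglongrightarrow> 0" using dnorm by (simp add: tendsto_norm_zero_iff)
  define P0 where "P0 = \<Phi> z0 0"
  define Mx where "Mx = max (norm (x 0)) (norm z0 + max 1 (2 * P0))"
  have xb: "norm (x k) \<le> Mx" for k
  proof (cases k)
    case 0 then show ?thesis unfolding Mx_def by simp
  next
    case (Suc n)
    have "(1/2) * (norm (x (Suc n) - z0))\<^sup>2 \<le> P0" using lower[of n z0] Phi_dec[OF z0Z, of n] unfolding P0_def by linarith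
    then have sq: "(norm (x (Suc n) - z0))\<^sup>2 \<le> 2 * P0" by simp
    have "norm (x (Suc n) - z0) \<le> max 1 (2 * P0)"
    proof (cases "norm (x (Suc n) - z0) \<le> 1")
      case True then show ?thesis by simp
    next
      case False
      then have "1 * norm (x (Suc n) - z0) \<le> norm (x (Suc n) - z0) * norm (x (Suc n) - z0)"
        by (intro mult_right_mono) auto
      then have "norm (x (Suc n) - z0) \<le> (norm (x (Suc n) - z0))\<^sup>2" by (simp add: power2_eq_square)
      then show ?thesis using sq by simp
    qed
    moreover have "norm (x (Suc n)) \<le> norm z0 + norm (x (Suc n) - z0)" by (metis norm_triangle_sub add.commute)
    ultimately show ?thesis unfolding Mx_def Suc by simp
  qed
  have conv: "convergent (\<lambda>k. (norm (x k - z))\<^sup>2)" if zMf: "z \<in> zer Mf" for z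
  proof -
    have zZ: "- B z - C z \<in> M12 z" using zMf zerI by blast
    obtain l where l: "(\<lambda>n. \<Phi> z n) \<longlonglongrightarrow> l" using Phi_conv[OF zZ] by blast
    define rem where "rem n = - 2 * \<gamma> * inner (A2 (y n) - A2 (x n)) (y n - z) + c1 * (norm (d n))\<^sup>2" for n
    define g where "g n = 2 * \<gamma> * (L * norm (d n) * (Mx + norm z + \<gamma> * \<mu> * norm (d n))) + c1 * (norm (d n))\<^sup>2" for n
    have g0: "g \<longlonglongrightarrow> 2 * \<gamma> * (L * 0 * (Mx + norm z + \<gamma> * \<mu> * 0)) + c1 * 0\<^sup>2"
      unfolding g_def by (intro tendsto_intros dnorm)
    then have g0': "g \<longlonglongrightarrow> 0" by simp
    have "norm (rem n) \<le> g n" for n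
    proof -
      have nx: "norm (x (Suc n) - z) \<le> Mx + norm z" using xb[of "Suc n"] norm_triangle_ineq4[of "x (Suc n)" z] by linarith
      have "\<bar>inner (A2 (y n) - A2 (x n)) (y n - z)\<bar> \<le> L * norm (d n) * (norm (x (Suc n) - z) + \<gamma> * \<mu> * norm (d n))"
        by (rule absI)
      also have "\<dots> \<le> L * norm (d n) * (Mx + norm z + \<gamma> * \<mu> * norm (d n))"
        using nx L0 by (intro mult_left_mono) auto
      finally have a: "\<bar>inner (A2 (y n) - A2 (x n)) (y n - z)\<bar> \<le> L * norm (d n) * (Mx + norm z + \<gamma> * \<mu> * norm (d n))" .
      have t1: "norm (rem n) \<le> \<bar>- 2 * \<gamma> * inner (A2 (y n) - A2 (x n)) (y n - z)\<bar> + \<bar>c1 * (norm (d n))\<^sup>2\<bar>"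
        unfolding rem_def real_norm_def by (rule abs_triangle_ineq)
      have t2: "\<bar>- 2 * \<gamma> * inner (A2 (y n) - A2 (x n)) (y n - z)\<bar> = 2 * \<gamma> * \<bar>inner (A2 (y n) - A2 (x n)) (y n - z)\<bar>"
        using gam by (simp add: abs_mult)
      have t3: "\<bar>c1 * (norm (d n))\<^sup>2\<bar> = c1 * (norm (d n))\<^sup>2" using c10 by simp
      have t4: "2 * \<gamma> * \<bar>inner (A2 (y n) - A2 (x n)) (y n - z)\<bar> \<le> 2 * \<gamma> * (L * norm (d n) * (Mx + norm z + \<gamma> * \<mu> * norm (d n)))"
        using a gam by simp
      have "norm (rem n) \<le> g n" using t1 t2 t3 t4 unfolding g_def by linarith
      then show ?thesis .
    qed
    then have "rem \<longlonglongrightarrow> 0"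
      using Lim_null_comparison[where f=rem and g=g, OF _ g0'] by (simp add: always_eventually)
    then have "(\<lambda>n. \<Phi> z n - rem n) \<longlonglongrightarrow> l - 0" by (intro tendsto_diff l)
    moreover have "\<Phi> z n - rem n = (norm (x (Suc n) - z))\<^sup>2" for n unfolding \<Phi>_def rem_def by simp
    ultimately have "(\<lambda>n. (norm (x (Suc n) - z))\<^sup>2) \<longlonglongrightarrow> l" by simp
    then have "(\<lambda>n. (norm (x n - z))\<^sup>2) \<longlonglongrightarrow> l" by (rule LIMSEQ_imp_Suc)
    then show ?thesis unfolding convergent_def by blast
  qed
  define s where "s k = u k + B (y k) + C (y k)" for k
  have sM: "s k \<in> Mf (y k)" for k unfolding Mf_def s_def by (simp add: op_plus_sv_iff uM)
  have s0: "s \<longlonglongrightarrow> 0"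
  proof -
    have se: "s (Suc n) = (1/\<gamma>) *\<^sub>R d (Suc n) + (B (y (Suc n)) - B (x (Suc n))) + (C (y (Suc n)) - C (x (Suc n)))
        + (A2 (y (Suc n)) - A2 (x (Suc n))) - (A2 (y n) - A2 (x n))" for n
    proof -
      have "u (Suc n) = (1/\<gamma>) *\<^sub>R (\<gamma> *\<^sub>R u (Suc n))" using gam by simp
      also have "\<dots> = (1/\<gamma>) *\<^sub>R d (Suc n) - B (x (Suc n)) - C (x (Suc n)) + (A2 (y (Suc n)) - A2 (x (Suc n)))
         - (A2 (y n) - A2 (x n))"
        unfolding F1 xp_def yp_def d_def using gam by (simp add: scaleR_diff_right scaleR_add_right)
      finally show ?thesis unfolding s_def by (simp add: algebra_simps)
    qed
    define h where "h n = (1/\<gamma> + \<mu> + \<beta> + L) * norm (d (Suc n)) + L * norm (d n)" for n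
    have h0: "h \<longlonglongrightarrow> (1/\<gamma> + \<mu> + \<beta> + L) * 0 + L * 0"
      unfolding h_def by (intro tendsto_intros LIMSEQ_Suc[OF dnorm] dnorm)
    have "norm (s (Suc n)) \<le> h n" for n
    proof -
      have "norm (s (Suc n)) \<le> norm ((1/\<gamma>) *\<^sub>R d (Suc n)) + norm (B (y (Suc n)) - B (x (Suc n)))
         + norm (C (y (Suc n)) - C (x (Suc n))) + norm (A2 (y (Suc n)) - A2 (x (Suc n))) + norm (A2 (y n) - A2 (x n))"
        unfolding se by (rule norm5)
      also have "\<dots> \<le> (1/\<gamma>) * norm (d (Suc n)) + \<mu> * norm (d (Suc n)) + \<beta> * norm (d (Suc n)) + L * norm (d (Suc n)) + L * norm (d n)"
      proof -
        have "norm ((1/\<gamma>) *\<^sub>R d (Suc n)) = (1/\<gamma>) * norm (d (Suc n))" using gam by simp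
        moreover have "norm (B (y (Suc n)) - B (x (Suc n))) \<le> \<mu> * norm (d (Suc n))"
          using BL[of "y (Suc n)" "x (Suc n)"] unfolding d_def by (simp add: norm_minus_commute)
        moreover have "norm (C (y (Suc n)) - C (x (Suc n))) \<le> \<beta> * norm (d (Suc n))"
          using CL[of "y (Suc n)" "x (Suc n)"] unfolding d_def by (simp add: norm_minus_commute)
        moreover have "norm (A2 (y (Suc n)) - A2 (x (Suc n))) \<le> L * norm (d (Suc n))"
          using A2L[of "y (Suc n)" "x (Suc n)"] unfolding d_def by (simp add: norm_minus_commute)
        moreover have "norm (A2 (y n) - A2 (x n)) \<le> L * norm (d n)"
          using A2L[of "y n" "x n"] unfolding d_def by (simp add: norm_minus_commute)
        ultimately show ?thesis by linarith
      qed
      also have "\<dots> = h n" unfolding h_def by (simp add: algebra_simps)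
      finally show ?thesis .
    qed
    then have "(\<lambda>n. s (Suc n)) \<longlonglongrightarrow> 0"
      using Lim_null_comparison[where f="\<lambda>n. s (Suc n)" and g=h] h0 by (simp add: always_eventually)
    then show ?thesis by (rule LIMSEQ_imp_Suc)
  qed
  obtain Kd where Kd: "\<And>k. norm (d k) \<le> Kd"
  proof -
    have "Bseq d" using d0 by (intro convergent_imp_Bseq) (auto simp: convergent_def)
    then obtain K where "0 < K" "\<forall>n. norm (d n) \<le> K" by (rule BseqE)
    then show ?thesis using that by blast
  qed
  have clus: "q \<in> zer Mf" if r: "strict_mono r" and wq: "weakly_converges (x \<circ> r) q" for r q
  proof -
    have yb: "norm ((y \<circ> r) k) \<le> Mx + Kd" for k
    proof -
      have "y (r k) = x (r k) - d (r k)" unfolding d_def by simp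
      then have "norm (y (r k)) \<le> norm (x (r k)) + norm (d (r k))" by (metis norm_triangle_ineq4)
      then show ?thesis using xb[of "r k"] Kd[of "r k"] by simp
    qed
    have wy: "weakly_converges (y \<circ> r) q"
      unfolding weakly_converges_def
    proof
      fix w
      have a: "(\<lambda>k. inner (x (r k)) w) \<longlonglongrightarrow> inner q w" using wq unfolding weakly_converges_def by (simp add: o_def)
      have "(d \<circ> r) \<longlonglongrightarrow> 0" using d0 r by (rule LIMSEQ_subseq_LIMSEQ)
      then have b: "(\<lambda>k. inner (d (r k)) w) \<longlonglongrightarrow> inner 0 w" by (intro tendsto_intros) (simp add: o_def)
      have "(\<lambda>k. inner (x (r k)) w - inner (d (r k)) w) \<longlonglongrightarrow> inner q w - inner 0 w" by (intro tendsto_diff a b)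
      moreover have "inner (x (r k)) w - inner (d (r k)) w = inner ((y \<circ> r) k) w" for k
        unfolding d_def by (simp add: inner_diff_left)
      ultimately show "(\<lambda>k. inner ((y \<circ> r) k) w) \<longlonglongrightarrow> inner q w" by simp
    qed
    have "(s \<circ> r) \<longlonglongrightarrow> 0" using s0 r by (rule LIMSEQ_subseq_LIMSEQ)
    then have "0 \<in> Mf q"
      using maxmono_demiclosed[OF Mfmax, where s="s \<circ> r" and y="y \<circ> r" and q=q and B="Mx + Kd"] sM wy yb
      by (simp add: o_def)
    then show ?thesis unfolding zer_def by simp
  qed
  have "\<exists>p\<in>zer Mf. weakly_converges x p"
    by (rule opial[OF xb conv clus])
  then show ?thesis unfolding Mf_def M12_def .
qed

end
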